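(* Let $R$ be a left coherent ring and $M\in R\text{-}\mathbf{Mod}$. Then (1) $\ker(\mathrm{Defect})\subseteq\ker(\mathrm{ev}_M)$ if and only if $M$ is fp-injective; (2) $\ker(\mathrm{Defect})=\ker(\mathrm{ev}_M)$ if and only if $M$ is fp-injective and an fp-cogenerator.
   Context: $R$ is left coherent if every finitely generated left ideal is finitely presented; then $R\text{-}\mathbf{mod}$ (finitely presented left modules) is abelian. $R\text{-}\mathbf{mod}\text{-}\mathbf{mod}$ is the abelian category of finitely presented additive functors $\mathcal G:R\text{-}\mathbf{mod}\to\mathbf{Ab}$ (with a presentation $\operatorname{Hom}(N',-)\xrightarrow{\operatorname{Hom}(\alpha,-)}\operatorname{Hom}(N,-)\to\mathcal G\to0$, $\alpha:N\to N'$ in $R\text{-}\mathbf{mod}$); $\mathrm{Defect}(\mathcal G):=\ker(\alpha)$, and $\ker(\mathrm{Defect})$ is the full subcategory of $\mathcal G$ with $\mathrm{Defect}(\mathcal G)=0$. Each $\mathcal G$ is identified with its extension to all left modules commuting with filtered colimits; $\mathrm{ev}_M(\mathcal G)=\mathcal G(M)$, and $\ker(\mathrm{ev}_M)$ is the full subcategory of $\mathcal G$ with $\mathcal G(M)=0$. $M$ is fp-injective if $\operatorname{Ext}^1(N,M)=0$ for all finitely presented left modules $N$; $M$ is an fp-cogenerator if $\operatorname{Hom}(-,M):(R\text{-}\mathbf{mod})^{\mathrm{op}}\to\mathbf{Ab}$ is faithful. *)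

theory Defs
  imports "HOL-Algebra.Module"
begin

text \<open>Left modules over a (not necessarily commutative) ring R.
  HOL-Algebra's locale module requires a commutative ring, so we define
  left modules directly, reusing only the record type module.\<close>

definition lmod :: "'a ring \<Rightarrow> ('a, 'm) module \<Rightarrow> bool" where
  "lmod R M \<longleftrightarrow> ring R \<and> abelian_group M \<and>
     (\<forall>a\<in>carrier R. \<forall>x\<in>carrier M. smult M a x \<in> carrier M) \<and>
     (\<forall>a\<in>carrier R. \<forall>x\<in>carrier M. \<forall>y\<in>carrier M.
        smult M a (x \<oplus>\<^bsub>M\<^esub> y) = smult M a x \<oplus>\<^bsub>M\<^esub> smult M a y) \<and>
     (\<forall>a\<in>carrier R. \<forall>b\<in>carrier R. \<forall>x\<in>carrier M.
        smult M (a \<oplus>\<^bsub>R\<^esub> b) x = smult M a x \<oplus>\<^bsub>M\<^esub> smult M b x) \<and>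
     (\<forall>a\<in>carrier R. \<forall>b\<in>carrier R. \<forall>x\<in>carrier M.
        smult M (a \<otimes>\<^bsub>R\<^esub> b) x = smult M a (smult M b x)) \<and>
     (\<forall>x\<in>carrier M. smult M \<one>\<^bsub>R\<^esub> x = x)"

text \<open>R-linear maps (considered on the carrier only).\<close>
definition lhom :: "'a ring \<Rightarrow> ('a, 'm) module \<Rightarrow> ('a, 'n) module \<Rightarrow> ('m \<Rightarrow> 'n) set" where
  "lhom R M N = {f. (\<forall>x\<in>carrier M. f x \<in> carrier N) \<and>
     (\<forall>x\<in>carrier M. \<forall>y\<in>carrier M. f (x \<oplus>\<^bsub>M\<^esub> y) = f x \<oplus>\<^bsub>N\<^esub> f y) \<and>
     (\<forall>a\<in>carrier R. \<forall>x\<in>carrier M. f (smult M a x) = smult N a (f x))}"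

definition lsubmod :: "'a ring \<Rightarrow> ('a, 'm) module \<Rightarrow> 'm set \<Rightarrow> bool" where
  "lsubmod R M S \<longleftrightarrow> S \<subseteq> carrier M \<and> \<zero>\<^bsub>M\<^esub> \<in> S \<and>
     (\<forall>x\<in>S. \<forall>y\<in>S. x \<oplus>\<^bsub>M\<^esub> y \<in> S) \<and>
     (\<forall>a\<in>carrier R. \<forall>x\<in>S. smult M a x \<in> S)"

definition lfingen :: "'a ring \<Rightarrow> ('a, 'm) module \<Rightarrow> 'm set \<Rightarrow> bool" where
  "lfingen R M S \<longleftrightarrow> lsubmod R M S \<and>
     (\<exists>X. finite X \<and> X \<subseteq> S \<and> (\<forall>T. lsubmod R M T \<and> X \<subseteq> T \<longrightarrow> S \<subseteq> T))"

definition freemod :: "'a ring \<Rightarrow> nat \<Rightarrow> ('a, nat \<Rightarrow> 'a) module" where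
  "freemod R n = \<lparr>carrier = {v. (\<forall>i. v i \<in> carrier R) \<and> (\<forall>i\<ge>n. v i = \<zero>\<^bsub>R\<^esub>)},
     mult = (\<lambda>v w. undefined), one = undefined,
     zero = (\<lambda>i. \<zero>\<^bsub>R\<^esub>),
     add = (\<lambda>v w i. v i \<oplus>\<^bsub>R\<^esub> w i),
     smult = (\<lambda>a v i. a \<otimes>\<^bsub>R\<^esub> v i)\<rparr>"

definition lfp :: "'a ring \<Rightarrow> ('a, 'm) module \<Rightarrow> bool" where
  "lfp R N \<longleftrightarrow> lmod R N \<and> (\<exists>n f. f \<in> lhom R (freemod R n) N \<and>
     f ` carrier (freemod R n) = carrier N \<and>
     lfingen R (freemod R n) {v \<in> carrier (freemod R n). f v = \<zero>\<^bsub>N\<^esub>})"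

definition ring_lmod :: "'a ring \<Rightarrow> ('a, 'a) module" where
  "ring_lmod R = \<lparr>carrier = carrier R, mult = mult R, one = one R,
     zero = zero R, add = add R, smult = mult R\<rparr>"

definition left_coherent :: "'a ring \<Rightarrow> bool" where
  "left_coherent R \<longleftrightarrow> ring R \<and>
     (\<forall>I. lfingen R (ring_lmod R) I \<longrightarrow> lfp R ((ring_lmod R)\<lparr>carrier := I\<rparr>))"

text \<open>Objects of R-mod: every finitely presented module is isomorphic to a quotient
  of some R^n, whose carrier consists of cosets, i.e. of type (nat => 'a) set.
  We therefore take R-mod to consist of the finitely presented modules of this type.\<close>
type_synonym 'a fpmod = "('a, (nat \<Rightarrow> 'a) set) module"

text \<open>Ext^1(N,M) = 0 (Yoneda description): every short exact sequence
  0 -> M -> E -> N -> 0 splits.  The carrier of any such E is in bijection with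
  carrier M x carrier N, so E may be taken with carrier type 'm x 'n.\<close>
definition ext1_zero :: "'a ring \<Rightarrow> ('a, 'n) module \<Rightarrow> ('a, 'm) module \<Rightarrow> bool" where
  "ext1_zero R N M \<longleftrightarrow>
     (\<forall>(E :: ('a, 'm \<times> 'n) module) i p.
        lmod R E \<and> i \<in> lhom R M E \<and> p \<in> lhom R E N \<and>
        inj_on i (carrier M) \<and> p ` carrier E = carrier N \<and>
        i ` carrier M = {e \<in> carrier E. p e = \<zero>\<^bsub>N\<^esub>}
        \<longrightarrow> (\<exists>r \<in> lhom R E M. \<forall>x\<in>carrier M. r (i x) = x))"

definition fp_injective :: "'a ring \<Rightarrow> ('a, 'm) module \<Rightarrow> bool" where
  "fp_injective R M \<longleftrightarrow> (\<forall>N :: 'a fpmod. lfp R N \<longrightarrow> ext1_zero R N M)"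

text \<open>Hom(-,M) : (R-mod)^op -> Ab is faithful.\<close>
definition fp_cogenerator :: "'a ring \<Rightarrow> ('a, 'm) module \<Rightarrow> bool" where
  "fp_cogenerator R M \<longleftrightarrow>
     (\<forall>(A :: 'a fpmod) (B :: 'a fpmod) f g.
        lfp R A \<and> lfp R B \<and> f \<in> lhom R A B \<and> g \<in> lhom R A B \<and>
        (\<forall>h \<in> lhom R B M. \<forall>x\<in>carrier A. h (f x) = h (g x))
        \<longrightarrow> (\<forall>x\<in>carrier A. f x = g x))"

text \<open>A finitely presented functor G is given by a presentation
  Hom(N',-) --Hom(alpha,-)--> Hom(N,-) --> G --> 0 with alpha : N -> N' in R-mod.
  Defect(G) = ker alpha; G(M) = coker(Hom(alpha,M)) (the extension commuting with
  filtered colimits, as N, N' are finitely presented).\<close>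
definition defect_zero :: "('a, 'n) module \<Rightarrow> ('a, 'k) module \<Rightarrow> ('n \<Rightarrow> 'k) \<Rightarrow> bool" where
  "defect_zero N N' \<alpha> \<longleftrightarrow> (\<forall>x\<in>carrier N. \<alpha> x = \<zero>\<^bsub>N'\<^esub> \<longrightarrow> x = \<zero>\<^bsub>N\<^esub>)"

definition ev_zero :: "'a ring \<Rightarrow> ('a, 'n) module \<Rightarrow> ('a, 'k) module \<Rightarrow> ('n \<Rightarrow> 'k)
    \<Rightarrow> ('a, 'm) module \<Rightarrow> bool" where
  "ev_zero R N N' \<alpha> M \<longleftrightarrow>
     (\<forall>h \<in> lhom R N M. \<exists>\<beta> \<in> lhom R N' M. \<forall>x\<in>carrier N. \<beta> (\<alpha> x) = h x)"

definition kerDefect_sub_kerEv :: "'a ring \<Rightarrow> ('a, 'm) module \<Rightarrow> bool" where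
  "kerDefect_sub_kerEv R M \<longleftrightarrow>
     (\<forall>(N :: 'a fpmod) (N' :: 'a fpmod) \<alpha>.
        lfp R N \<and> lfp R N' \<and> \<alpha> \<in> lhom R N N' \<and> defect_zero N N' \<alpha>
        \<longrightarrow> ev_zero R N N' \<alpha> M)"

definition kerDefect_eq_kerEv :: "'a ring \<Rightarrow> ('a, 'm) module \<Rightarrow> bool" where
  "kerDefect_eq_kerEv R M \<longleftrightarrow>
     (\<forall>(N :: 'a fpmod) (N' :: 'a fpmod) \<alpha>.
        lfp R N \<and> lfp R N' \<and> \<alpha> \<in> lhom R N N'
        \<longrightarrow> (defect_zero N N' \<alpha> \<longleftrightarrow> ev_zero R N N' \<alpha> M))"

end

theory Submission
  imports Defs
begin


lemma (in abelian_group) minus_zero_iff: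
  "x \<in> carrier G \<Longrightarrow> y \<in> carrier G \<Longrightarrow> (x \<ominus> y = \<zero>) = (x = y)"
  using minus_equality[of x "\<ominus> y"] minus_minus[of y] by (auto simp: minus_eq r_neg)

context abelian_group begin
lemma neg_zero[simp]: "\<ominus> \<zero> = \<zero>" by (rule minus_equality) simp_all
lemma sub_zero[simp]: "x \<in> carrier G \<Longrightarrow> x \<ominus> \<zero> = x" by (simp add: minus_eq)
lemma c1: "x \<in> carrier G \<Longrightarrow> y \<in> carrier G \<Longrightarrow> x \<oplus> (y \<oplus> \<ominus> x) = y"
  by (simp add: a_comm[of y "\<ominus> x"] r_neg2)
lemma c2: "x \<in> carrier G \<Longrightarrow> y \<in> carrier G \<Longrightarrow> z \<in> carrier G \<Longrightarrow> x \<oplus> (y \<oplus> (\<ominus> x \<oplus> z)) = y \<oplus> z"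
  by (simp add: a_lcomm[of x y] r_neg2)
lemma c3: "x \<in> carrier G \<Longrightarrow> y \<in> carrier G \<Longrightarrow> \<ominus> x \<oplus> (y \<oplus> x) = y"
  by (simp add: a_comm[of y x] r_neg1)
lemma c4: "x \<in> carrier G \<Longrightarrow> y \<in> carrier G \<Longrightarrow> z \<in> carrier G \<Longrightarrow> \<ominus> x \<oplus> (y \<oplus> (x \<oplus> z)) = y \<oplus> z"
  by (simp add: a_lcomm[of "\<ominus> x" y] r_neg1)
lemmas gsimps = minus_eq a_assoc minus_add minus_minus a_comm a_lcomm r_neg1 r_neg2 c1 c2 c3 c4 r_neg l_neg r_zero l_zero
lemma t1: "z \<in> carrier G \<Longrightarrow> x \<in> carrier G \<Longrightarrow> y \<in> carrier G \<Longrightarrow> (z \<ominus> x) \<oplus> (x \<ominus> y) = z \<ominus> y"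
  by (simp add: gsimps)
lemma t2: "z \<in> carrier G \<Longrightarrow> x \<in> carrier G \<Longrightarrow> y \<in> carrier G \<Longrightarrow> (z \<ominus> y) \<ominus> (x \<ominus> y) = z \<ominus> x"
  by (simp add: gsimps)
lemma t3: "u \<in> carrier G \<Longrightarrow> v \<in> carrier G \<Longrightarrow> y \<in> carrier G \<Longrightarrow> (u \<oplus> v) \<ominus> (u \<oplus> y) = v \<ominus> y"
  by (simp add: gsimps)
lemma t4: "u \<in> carrier G \<Longrightarrow> x \<in> carrier G \<Longrightarrow> y \<in> carrier G \<Longrightarrow> (u \<oplus> y) \<ominus> (x \<oplus> y) = u \<ominus> x"
  by (simp add: gsimps)
lemma t5: "a \<in> carrier G \<Longrightarrow> b \<in> carrier G \<Longrightarrow> c \<in> carrier G \<Longrightarrow> d \<in> carrier G \<Longrightarrow> (a \<oplus> b) \<ominus> (c \<oplus> d) = (a \<ominus> c) \<oplus> (b \<ominus> d)"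
  by (simp add: gsimps)
end

locale lmodule =
  fixes R :: "'a ring" and M :: "('a,'m) module"
  assumes lm: "lmod R M"
begin
sublocale R: ring R using lm by (simp add: lmod_def)
sublocale M: abelian_group M using lm by (simp add: lmod_def)

lemma smult_closed[simp,intro]: "a \<in> carrier R \<Longrightarrow> x \<in> carrier M \<Longrightarrow> a \<odot>\<^bsub>M\<^esub> x \<in> carrier M"
  using lm by (simp add: lmod_def)
lemma smult_add: "a \<in> carrier R \<Longrightarrow> x \<in> carrier M \<Longrightarrow> y \<in> carrier M \<Longrightarrow>
   a \<odot>\<^bsub>M\<^esub> (x \<oplus>\<^bsub>M\<^esub> y) = a \<odot>\<^bsub>M\<^esub> x \<oplus>\<^bsub>M\<^esub> a \<odot>\<^bsub>M\<^esub> y"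
  using lm by (simp add: lmod_def)
lemma add_smult: "a \<in> carrier R \<Longrightarrow> b \<in> carrier R \<Longrightarrow> x \<in> carrier M \<Longrightarrow>
   (a \<oplus>\<^bsub>R\<^esub> b) \<odot>\<^bsub>M\<^esub> x = a \<odot>\<^bsub>M\<^esub> x \<oplus>\<^bsub>M\<^esub> b \<odot>\<^bsub>M\<^esub> x"
  using lm by (simp add: lmod_def)
lemma mult_smult: "a \<in> carrier R \<Longrightarrow> b \<in> carrier R \<Longrightarrow> x \<in> carrier M \<Longrightarrow>
   (a \<otimes>\<^bsub>R\<^esub> b) \<odot>\<^bsub>M\<^esub> x = a \<odot>\<^bsub>M\<^esub> (b \<odot>\<^bsub>M\<^esub> x)"
  using lm by (simp add: lmod_def)
lemma one_smult[simp]: "x \<in> carrier M \<Longrightarrow> \<one>\<^bsub>R\<^esub> \<odot>\<^bsub>M\<^esub> x = x"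
  using lm by (simp add: lmod_def)

lemma zero_smult[simp]: "x \<in> carrier M \<Longrightarrow> \<zero>\<^bsub>R\<^esub> \<odot>\<^bsub>M\<^esub> x = \<zero>\<^bsub>M\<^esub>"
proof -
  assume x: "x \<in> carrier M"
  have "\<zero>\<^bsub>R\<^esub> \<odot>\<^bsub>M\<^esub> x \<oplus>\<^bsub>M\<^esub> \<zero>\<^bsub>R\<^esub> \<odot>\<^bsub>M\<^esub> x = \<zero>\<^bsub>R\<^esub> \<odot>\<^bsub>M\<^esub> x \<oplus>\<^bsub>M\<^esub> \<zero>\<^bsub>M\<^esub>"
    using add_smult[of "\<zero>\<^bsub>R\<^esub>" "\<zero>\<^bsub>R\<^esub>" x] x by simp
  thus ?thesis using x by simp
qed

lemma smult_zero[simp]: "a \<in> carrier R \<Longrightarrow> a \<odot>\<^bsub>M\<^esub> \<zero>\<^bsub>M\<^esub> = \<zero>\<^bsub>M\<^esub>"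
proof -
  assume a: "a \<in> carrier R"
  have "a \<odot>\<^bsub>M\<^esub> \<zero>\<^bsub>M\<^esub> \<oplus>\<^bsub>M\<^esub> a \<odot>\<^bsub>M\<^esub> \<zero>\<^bsub>M\<^esub> = a \<odot>\<^bsub>M\<^esub> \<zero>\<^bsub>M\<^esub> \<oplus>\<^bsub>M\<^esub> \<zero>\<^bsub>M\<^esub>"
    using smult_add[of a "\<zero>\<^bsub>M\<^esub>" "\<zero>\<^bsub>M\<^esub>"] a by simp
  thus ?thesis using a by simp
qed

lemma smult_neg: "a \<in> carrier R \<Longrightarrow> x \<in> carrier M \<Longrightarrow> a \<odot>\<^bsub>M\<^esub> (\<ominus>\<^bsub>M\<^esub> x) = \<ominus>\<^bsub>M\<^esub> (a \<odot>\<^bsub>M\<^esub> x)"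
proof -
  assume a: "a \<in> carrier R" and x: "x \<in> carrier M"
  have "a \<odot>\<^bsub>M\<^esub> (\<ominus>\<^bsub>M\<^esub> x) \<oplus>\<^bsub>M\<^esub> a \<odot>\<^bsub>M\<^esub> x = \<zero>\<^bsub>M\<^esub>"
    using smult_add[of a "\<ominus>\<^bsub>M\<^esub> x" x] a x by (simp add: M.l_neg)
  thus ?thesis using a x by (simp add: M.minus_equality)
qed

lemma neg_smult: "a \<in> carrier R \<Longrightarrow> x \<in> carrier M \<Longrightarrow> (\<ominus>\<^bsub>R\<^esub> a) \<odot>\<^bsub>M\<^esub> x = \<ominus>\<^bsub>M\<^esub> (a \<odot>\<^bsub>M\<^esub> x)"
proof -
  assume a: "a \<in> carrier R" and x: "x \<in> carrier M"
  have "(\<ominus>\<^bsub>R\<^esub> a) \<odot>\<^bsub>M\<^esub> x \<oplus>\<^bsub>M\<^esub> a \<odot>\<^bsub>M\<^esub> x = \<zero>\<^bsub>M\<^esub>"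
    using add_smult[of "\<ominus>\<^bsub>R\<^esub> a" a x] a x by (simp add: R.l_neg)
  thus ?thesis using a x by (simp add: M.minus_equality)
qed

lemma negone_smult: "x \<in> carrier M \<Longrightarrow> (\<ominus>\<^bsub>R\<^esub> \<one>\<^bsub>R\<^esub>) \<odot>\<^bsub>M\<^esub> x = \<ominus>\<^bsub>M\<^esub> x"
  by (simp add: neg_smult)

lemma smult_minus: "a \<in> carrier R \<Longrightarrow> x \<in> carrier M \<Longrightarrow> y \<in> carrier M \<Longrightarrow>
   a \<odot>\<^bsub>M\<^esub> (x \<ominus>\<^bsub>M\<^esub> y) = a \<odot>\<^bsub>M\<^esub> x \<ominus>\<^bsub>M\<^esub> a \<odot>\<^bsub>M\<^esub> y"
  by (simp add: M.minus_eq smult_add smult_neg)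

end


lemma lhomI:
  assumes "\<And>x. x \<in> carrier M \<Longrightarrow> f x \<in> carrier N"
    "\<And>x y. x \<in> carrier M \<Longrightarrow> y \<in> carrier M \<Longrightarrow> f (x \<oplus>\<^bsub>M\<^esub> y) = f x \<oplus>\<^bsub>N\<^esub> f y"
    "\<And>a x. a \<in> carrier R \<Longrightarrow> x \<in> carrier M \<Longrightarrow> f (a \<odot>\<^bsub>M\<^esub> x) = a \<odot>\<^bsub>N\<^esub> f x"
  shows "f \<in> lhom R M N"
  using assms unfolding lhom_def by auto

lemma lhom_closed: "f \<in> lhom R M N \<Longrightarrow> x \<in> carrier M \<Longrightarrow> f x \<in> carrier N"
  unfolding lhom_def by auto
lemma lhom_add: "f \<in> lhom R M N \<Longrightarrow> x \<in> carrier M \<Longrightarrow> y \<in> carrier M \<Longrightarrow> f (x \<oplus>\<^bsub>M\<^esub> y) = f x \<oplus>\<^bsub>N\<^esub> f y"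
  unfolding lhom_def by auto
lemma lhom_smult: "f \<in> lhom R M N \<Longrightarrow> a \<in> carrier R \<Longrightarrow> x \<in> carrier M \<Longrightarrow> f (a \<odot>\<^bsub>M\<^esub> x) = a \<odot>\<^bsub>N\<^esub> f x"
  unfolding lhom_def by auto

lemma lhom_zero:
  assumes "lmod R M" "lmod R N" "f \<in> lhom R M N"
  shows "f \<zero>\<^bsub>M\<^esub> = \<zero>\<^bsub>N\<^esub>"
proof -
  interpret M: lmodule R M by (rule lmodule.intro) fact
  interpret N: lmodule R N by (rule lmodule.intro) fact
  have "f \<zero>\<^bsub>M\<^esub> = f (\<zero>\<^bsub>R\<^esub> \<odot>\<^bsub>M\<^esub> \<zero>\<^bsub>M\<^esub>)" by simp
  also have "\<dots> = \<zero>\<^bsub>R\<^esub> \<odot>\<^bsub>N\<^esub> f \<zero>\<^bsub>M\<^esub>" by (rule lhom_smult[OF assms(3)]) simp_all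
  also have "\<dots> = \<zero>\<^bsub>N\<^esub>" using lhom_closed[OF assms(3)] by simp
  finally show ?thesis .
qed

lemma lhom_neg:
  assumes "lmod R M" "lmod R N" "f \<in> lhom R M N" "x \<in> carrier M"
  shows "f (\<ominus>\<^bsub>M\<^esub> x) = \<ominus>\<^bsub>N\<^esub> f x"
proof -
  interpret M: lmodule R M by (rule lmodule.intro) fact
  interpret N: lmodule R N by (rule lmodule.intro) fact
  have "f (\<ominus>\<^bsub>M\<^esub> x) = f ((\<ominus>\<^bsub>R\<^esub> \<one>\<^bsub>R\<^esub>) \<odot>\<^bsub>M\<^esub> x)" using assms by (simp add: M.negone_smult)
  also have "\<dots> = \<ominus>\<^bsub>N\<^esub> f x" using assms lhom_smult[OF assms(3)] lhom_closed[OF assms(3)]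
    by (simp add: N.negone_smult)
  finally show ?thesis .
qed

lemma lhom_minus:
  assumes "lmod R M" "lmod R N" "f \<in> lhom R M N" "x \<in> carrier M" "y \<in> carrier M"
  shows "f (x \<ominus>\<^bsub>M\<^esub> y) = f x \<ominus>\<^bsub>N\<^esub> f y"
proof -
  interpret M: lmodule R M by (rule lmodule.intro) fact
  show ?thesis using assms lhom_add[OF assms(3)] lhom_neg[OF assms(1-3)]
    by (simp add: M.M.minus_eq abelian_group.minus_eq lmod_def)
qed

lemma lhom_comp: "f \<in> lhom R M N \<Longrightarrow> g \<in> lhom R N P \<Longrightarrow> (\<lambda>x. g (f x)) \<in> lhom R M P"
  unfolding lhom_def by auto

lemma lhom_id: "(\<lambda>x. x) \<in> lhom R M M"
  unfolding lhom_def by auto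

lemma lhom_zero_map: "lmod R N \<Longrightarrow> (\<lambda>x. \<zero>\<^bsub>N\<^esub>) \<in> lhom R M N"
proof -
  assume "lmod R N"
  then interpret N: lmodule R N by (rule lmodule.intro)
  show ?thesis by (rule lhomI) auto
qed

lemma lhom_plus:
  assumes "lmod R N" "f \<in> lhom R M N" "g \<in> lhom R M N"
  shows "(\<lambda>x. f x \<oplus>\<^bsub>N\<^esub> g x) \<in> lhom R M N"
proof -
  interpret N: lmodule R N by (rule lmodule.intro) fact
  note c = lhom_closed[OF assms(2)] lhom_closed[OF assms(3)]
  show ?thesis
  proof (rule lhomI)
    fix x y assume xy: "x \<in> carrier M" "y \<in> carrier M"
    show "f (x \<oplus>\<^bsub>M\<^esub> y) \<oplus>\<^bsub>N\<^esub> g (x \<oplus>\<^bsub>M\<^esub> y) = (f x \<oplus>\<^bsub>N\<^esub> g x) \<oplus>\<^bsub>N\<^esub> (f y \<oplus>\<^bsub>N\<^esub> g y)"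
      using xy c lhom_add[OF assms(2)] lhom_add[OF assms(3)] by (simp add: N.M.a_ac)
  next
    fix a x assume "a \<in> carrier R" "x \<in> carrier M"
    thus "f (a \<odot>\<^bsub>M\<^esub> x) \<oplus>\<^bsub>N\<^esub> g (a \<odot>\<^bsub>M\<^esub> x) = a \<odot>\<^bsub>N\<^esub> (f x \<oplus>\<^bsub>N\<^esub> g x)"
      using c lhom_smult[OF assms(2)] lhom_smult[OF assms(3)] by (simp add: N.smult_add)
  qed (use c in auto)
qed

lemma lhom_minus_map:
  assumes "lmod R M" "lmod R N" "f \<in> lhom R M N" "g \<in> lhom R M N"
  shows "(\<lambda>x. f x \<ominus>\<^bsub>N\<^esub> g x) \<in> lhom R M N"
proof -
  interpret N: lmodule R N by (rule lmodule.intro) fact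
  have "(\<lambda>x. \<ominus>\<^bsub>N\<^esub> g x) \<in> lhom R M N"
  proof (rule lhomI)
    fix x y assume xy: "x \<in> carrier M" "y \<in> carrier M"
    thus "\<ominus>\<^bsub>N\<^esub> g (x \<oplus>\<^bsub>M\<^esub> y) = \<ominus>\<^bsub>N\<^esub> g x \<oplus>\<^bsub>N\<^esub> \<ominus>\<^bsub>N\<^esub> g y"
      using lhom_closed[OF assms(4)] lhom_add[OF assms(4)] by (simp add: N.M.minus_add N.M.a_comm)
  next
    fix a x assume "a \<in> carrier R" "x \<in> carrier M"
    thus "\<ominus>\<^bsub>N\<^esub> g (a \<odot>\<^bsub>M\<^esub> x) = a \<odot>\<^bsub>N\<^esub> \<ominus>\<^bsub>N\<^esub> g x"
      using lhom_closed[OF assms(4)] lhom_smult[OF assms(4)] by (simp add: N.smult_neg)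
  qed (use lhom_closed[OF assms(4)] in auto)
  from lhom_plus[OF assms(2,3) this] show ?thesis by (simp add: N.M.minus_eq)
qed

lemma lhom_cong: "lmod R M \<Longrightarrow> f \<in> lhom R M N \<Longrightarrow> (\<And>x. x \<in> carrier M \<Longrightarrow> f x = g x) \<Longrightarrow> g \<in> lhom R M N"
proof -
  assume a: "lmod R M" "f \<in> lhom R M N" "\<And>x. x \<in> carrier M \<Longrightarrow> f x = g x"
  interpret lmodule R M by (rule lmodule.intro) fact
  show ?thesis using a(2) a(3)[symmetric] unfolding lhom_def by auto
qed

lemma lhom_restrict: "f \<in> lhom R M N \<Longrightarrow> S \<subseteq> carrier M \<Longrightarrow> f \<in> lhom R (M\<lparr>carrier := S\<rparr>) N"
  unfolding lhom_def by (auto simp: subset_iff)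

lemma lhom_into_sub: "f \<in> lhom R M N \<Longrightarrow> f ` carrier M \<subseteq> S \<Longrightarrow> f \<in> lhom R M (N\<lparr>carrier := S\<rparr>)"
  unfolding lhom_def by auto

lemma lhom_from_sub: "f \<in> lhom R M (N\<lparr>carrier := S\<rparr>) \<Longrightarrow> S \<subseteq> carrier N \<Longrightarrow> f \<in> lhom R M N"
  unfolding lhom_def by auto

lemma lhom_inv:
  assumes "f \<in> lhom R M N" "bij_betw f (carrier M) (carrier N)" "lmod R M"
  shows "inv_into (carrier M) f \<in> lhom R N M"
proof -
  interpret lmodule R M by (rule lmodule.intro) fact
  let ?g = "inv_into (carrier M) f"
  have gc: "?g y \<in> carrier M" "f (?g y) = y" if "y \<in> carrier N" for y
    using assms(2) that by (auto simp: bij_betw_def inv_into_into f_inv_into_f)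
  have gf: "?g (f x) = x" if "x \<in> carrier M" for x
    using assms(2) that by (simp add: bij_betw_def)
  show ?thesis
  proof (rule lhomI)
    fix x y assume xy: "x \<in> carrier N" "y \<in> carrier N"
    have "?g (x \<oplus>\<^bsub>N\<^esub> y) = ?g (f (?g x) \<oplus>\<^bsub>N\<^esub> f (?g y))" using gc xy by simp
    also have "\<dots> = ?g (f (?g x \<oplus>\<^bsub>M\<^esub> ?g y))" using lhom_add[OF assms(1)] gc xy by simp
    also have "\<dots> = ?g x \<oplus>\<^bsub>M\<^esub> ?g y" using xy gc by (intro gf) auto
    finally show "?g (x \<oplus>\<^bsub>N\<^esub> y) = ?g x \<oplus>\<^bsub>M\<^esub> ?g y" .
  next
    fix a x assume ax: "a \<in> carrier R" "x \<in> carrier N"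
    have "?g (a \<odot>\<^bsub>N\<^esub> x) = ?g (a \<odot>\<^bsub>N\<^esub> f (?g x))" using gc ax by simp
    also have "\<dots> = ?g (f (a \<odot>\<^bsub>M\<^esub> ?g x))" using lhom_smult[OF assms(1)] gc ax by simp
    also have "\<dots> = a \<odot>\<^bsub>M\<^esub> ?g x" using ax gc by (intro gf) auto
    finally show "?g (a \<odot>\<^bsub>N\<^esub> x) = a \<odot>\<^bsub>M\<^esub> ?g x" .
  qed (use gc in auto)
qed

lemma lsubmod_sub: "lsubmod R M S \<Longrightarrow> S \<subseteq> carrier M" by (simp add: lsubmod_def)
lemma lsubmod_zero: "lsubmod R M S \<Longrightarrow> \<zero>\<^bsub>M\<^esub> \<in> S" by (simp add: lsubmod_def)
lemma lsubmod_add: "lsubmod R M S \<Longrightarrow> x \<in> S \<Longrightarrow> y \<in> S \<Longrightarrow> x \<oplus>\<^bsub>M\<^esub> y \<in> S" by (simp add: lsubmod_def)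
lemma lsubmod_smult: "lsubmod R M S \<Longrightarrow> a \<in> carrier R \<Longrightarrow> x \<in> S \<Longrightarrow> a \<odot>\<^bsub>M\<^esub> x \<in> S" by (simp add: lsubmod_def)

lemma lsubmod_neg: "lmod R M \<Longrightarrow> lsubmod R M S \<Longrightarrow> x \<in> S \<Longrightarrow> \<ominus>\<^bsub>M\<^esub> x \<in> S"
proof -
  assume a: "lmod R M" "lsubmod R M S" "x \<in> S"
  interpret lmodule R M by (rule lmodule.intro) fact
  have "x \<in> carrier M" using a lsubmod_sub by blast
  hence "\<ominus>\<^bsub>M\<^esub> x = (\<ominus>\<^bsub>R\<^esub> \<one>\<^bsub>R\<^esub>) \<odot>\<^bsub>M\<^esub> x" by (simp add: negone_smult)
  thus ?thesis using lsubmod_smult[of R M S "\<ominus>\<^bsub>R\<^esub> \<one>\<^bsub>R\<^esub>" x] a by simp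
qed

lemma lsubmod_minus: "lmod R M \<Longrightarrow> lsubmod R M S \<Longrightarrow> x \<in> S \<Longrightarrow> y \<in> S \<Longrightarrow> x \<ominus>\<^bsub>M\<^esub> y \<in> S"
  by (simp add: a_minus_def lsubmod_add lsubmod_neg)

lemma lsubmod_lmod:
  assumes "lmod R M" "lsubmod R M S"
  shows "lmod R (M\<lparr>carrier := S\<rparr>)"
proof -
  interpret lmodule R M by (rule lmodule.intro) fact
  have sub: "S \<subseteq> carrier M" using assms(2) by (simp add: lsubmod_def)
  have "abelian_group (M\<lparr>carrier := S\<rparr>)"
  proof (rule abelian_groupI)
    fix x assume "x \<in> carrier (M\<lparr>carrier := S\<rparr>)"
    hence x: "x \<in> S" by simp
    show "\<exists>y\<in>carrier (M\<lparr>carrier := S\<rparr>). y \<oplus>\<^bsub>M\<lparr>carrier := S\<rparr>\<^esub> x = \<zero>\<^bsub>M\<lparr>carrier := S\<rparr>\<^esub>"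
      using lsubmod_neg[OF assms x] x sub by (intro bexI[of _ "\<ominus>\<^bsub>M\<^esub> x"]) (auto simp: M.l_neg)
  qed (use sub assms(2) in \<open>auto simp: lsubmod_def subset_iff M.a_ac\<close>)
  thus ?thesis using lm sub assms(2) unfolding lmod_def lsubmod_def by (auto simp: subset_iff)
qed

lemma lsubmod_carrier: "lmod R M \<Longrightarrow> lsubmod R M (carrier M)"
proof -
  assume "lmod R M"
  then interpret lmodule R M by (rule lmodule.intro)
  show ?thesis unfolding lsubmod_def by auto
qed

lemma lsubmod_kernel:
  assumes "lmod R M" "lmod R N" "f \<in> lhom R M N"
  shows "lsubmod R M {x \<in> carrier M. f x = \<zero>\<^bsub>N\<^esub>}"
proof -
  interpret M: lmodule R M by (rule lmodule.intro) fact
  interpret N: lmodule R N by (rule lmodule.intro) fact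
  show ?thesis using lhom_zero[OF assms] lhom_add[OF assms(3)] lhom_smult[OF assms(3)]
    unfolding lsubmod_def by auto
qed

lemma lsubmod_image:
  assumes "lmod R M" "lmod R N" "f \<in> lhom R M N" "lsubmod R M S"
  shows "lsubmod R N (f ` S)"
proof -
  interpret M: lmodule R M by (rule lmodule.intro) fact
  interpret N: lmodule R N by (rule lmodule.intro) fact
  have sub: "S \<subseteq> carrier M" using assms(4) by (simp add: lsubmod_def)
  show ?thesis unfolding lsubmod_def
  proof (intro conjI ballI)
    show "f ` S \<subseteq> carrier N" using sub lhom_closed[OF assms(3)] by auto
    show "\<zero>\<^bsub>N\<^esub> \<in> f ` S" using lhom_zero[OF assms(1-3)] lsubmod_zero[OF assms(4)] by force
    fix x y assume "x \<in> f ` S" "y \<in> f ` S"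
    then obtain u v where "u \<in> S" "v \<in> S" "x = f u" "y = f v" by auto
    moreover have "f u \<oplus>\<^bsub>N\<^esub> f v = f (u \<oplus>\<^bsub>M\<^esub> v)" using lhom_add[OF assms(3), of u v] sub \<open>u \<in> S\<close> \<open>v \<in> S\<close> by (auto simp: subset_iff)
    moreover have "u \<oplus>\<^bsub>M\<^esub> v \<in> S" using lsubmod_add[OF assms(4)] \<open>u \<in> S\<close> \<open>v \<in> S\<close> by auto
    ultimately show "x \<oplus>\<^bsub>N\<^esub> y \<in> f ` S" by auto
  next
    fix a x assume "a \<in> carrier R" "x \<in> f ` S"
    then obtain u where "u \<in> S" "x = f u" by auto
    moreover have "a \<odot>\<^bsub>N\<^esub> f u = f (a \<odot>\<^bsub>M\<^esub> u)" using lhom_smult[OF assms(3), of a u] sub \<open>u \<in> S\<close> \<open>a \<in> carrier R\<close> by (auto simp: subset_iff)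
    moreover have "a \<odot>\<^bsub>M\<^esub> u \<in> S" using lsubmod_smult[OF assms(4)] \<open>u \<in> S\<close> \<open>a \<in> carrier R\<close> by auto
    ultimately show "a \<odot>\<^bsub>N\<^esub> x \<in> f ` S" by auto
  qed
qed

lemma lsubmod_preimage:
  assumes "lmod R M" "lmod R N" "f \<in> lhom R M N" "lsubmod R N T"
  shows "lsubmod R M {x \<in> carrier M. f x \<in> T}"
proof -
  interpret M: lmodule R M by (rule lmodule.intro) fact
  interpret N: lmodule R N by (rule lmodule.intro) fact
  show ?thesis using lhom_zero[OF assms(1-3)] lhom_add[OF assms(3)] lhom_smult[OF assms(3)] assms(4)
    unfolding lsubmod_def by auto
qed

lemma lsubmod_Int: "lsubmod R M S \<Longrightarrow> lsubmod R M T \<Longrightarrow> lsubmod R M (S \<inter> T)"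
  unfolding lsubmod_def by auto

lemma lsubmod_mono_mod: "lsubmod R (M\<lparr>carrier := S\<rparr>) T \<Longrightarrow> S \<subseteq> carrier M \<Longrightarrow> lsubmod R M T"
  unfolding lsubmod_def by auto

lemma lsubmod_in_sub: "lsubmod R M T \<Longrightarrow> T \<subseteq> S \<Longrightarrow> lsubmod R (M\<lparr>carrier := S\<rparr>) T"
  unfolding lsubmod_def by auto

definition hull :: "'a ring \<Rightarrow> ('a,'m) module \<Rightarrow> 'm set \<Rightarrow> 'm set" where
  "hull R M X = {x \<in> carrier M. \<forall>T. lsubmod R M T \<and> X \<subseteq> T \<longrightarrow> x \<in> T}"

lemma hull_sub: "hull R M X \<subseteq> carrier M" by (auto simp: hull_def)

lemma hull_incl: "X \<subseteq> carrier M \<Longrightarrow> X \<subseteq> hull R M X" unfolding hull_def by blast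

lemma hull_min: "lsubmod R M T \<Longrightarrow> X \<subseteq> T \<Longrightarrow> hull R M X \<subseteq> T" unfolding hull_def by blast

lemma hull_lsubmod: "lmod R M \<Longrightarrow> lsubmod R M (hull R M X)"
proof -
  assume "lmod R M"
  then interpret lmodule R M by (rule lmodule.intro)
  show ?thesis unfolding hull_def lsubmod_def by auto
qed

lemma hull_mono: "X \<subseteq> Y \<Longrightarrow> hull R M X \<subseteq> hull R M Y" unfolding hull_def by blast

lemma lfingen_hull: "lmod R M \<Longrightarrow> lfingen R M S \<longleftrightarrow> (\<exists>X. finite X \<and> X \<subseteq> carrier M \<and> S = hull R M X)"
proof
  assume lm: "lmod R M"
  assume "lfingen R M S"
  then obtain X where X: "finite X" "X \<subseteq> S" "\<forall>T. lsubmod R M T \<and> X \<subseteq> T \<longrightarrow> S \<subseteq> T" and s: "lsubmod R M S"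
    by (auto simp: lfingen_def)
  have Xc: "X \<subseteq> carrier M" using X(2) lsubmod_sub[OF s] by blast
  have "S \<subseteq> hull R M X" using X(3) hull_lsubmod[OF lm, of X] hull_incl[OF Xc] by blast
  moreover have "hull R M X \<subseteq> S" by (rule hull_min[OF s X(2)])
  ultimately have "S = hull R M X" by blast
  thus "\<exists>X. finite X \<and> X \<subseteq> carrier M \<and> S = hull R M X" using X(1) Xc by blast
next
  assume lm: "lmod R M"
  assume "\<exists>X. finite X \<and> X \<subseteq> carrier M \<and> S = hull R M X"
  then obtain X where X: "finite X" "X \<subseteq> carrier M" "S = hull R M X" by blast
  have "lsubmod R M S" using X(3) hull_lsubmod[OF lm] by simp
  moreover have "X \<subseteq> S" using X(3) hull_incl[OF X(2)] by simp
  moreover have "\<forall>T. lsubmod R M T \<and> X \<subseteq> T \<longrightarrow> S \<subseteq> T" using X(3) hull_min by blast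
  ultimately show "lfingen R M S" unfolding lfingen_def using X(1) by blast
qed

lemma hull_image:
  assumes "lmod R M" "lmod R N" "f \<in> lhom R M N" "X \<subseteq> carrier M"
  shows "f ` hull R M X = hull R N (f ` X)"
proof
  have fX: "f ` X \<subseteq> carrier N" using assms(4) lhom_closed[OF assms(3)] by auto
  have "lsubmod R M {x \<in> carrier M. f x \<in> hull R N (f ` X)}"
    by (rule lsubmod_preimage[OF assms(1-3) hull_lsubmod[OF assms(2)]])
  moreover have "X \<subseteq> {x \<in> carrier M. f x \<in> hull R N (f ` X)}" using assms(4) hull_incl[OF fX] by auto
  ultimately have "hull R M X \<subseteq> {x \<in> carrier M. f x \<in> hull R N (f ` X)}" by (rule hull_min)
  thus "f ` hull R M X \<subseteq> hull R N (f ` X)" by auto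
  have "lsubmod R N (f ` hull R M X)" by (rule lsubmod_image[OF assms(1-3) hull_lsubmod[OF assms(1)]])
  moreover have "f ` X \<subseteq> f ` hull R M X" using hull_incl[OF assms(4)] by auto
  ultimately show "hull R N (f ` X) \<subseteq> f ` hull R M X" by (rule hull_min)
qed

lemma hull_eq_on:
  assumes "lmod R M" "lmod R N" "f \<in> lhom R M N" "g \<in> lhom R M N" "\<And>x. x \<in> X \<Longrightarrow> f x = g x"
    "x \<in> hull R M X" "X \<subseteq> carrier M"
  shows "f x = g x"
proof -
  interpret N: lmodule R N by (rule lmodule.intro) fact
  have "lsubmod R M {x \<in> carrier M. f x \<ominus>\<^bsub>N\<^esub> g x = \<zero>\<^bsub>N\<^esub>}"
    by (rule lsubmod_kernel[OF assms(1,2) lhom_minus_map[OF assms(1-4)]])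
  moreover have "X \<subseteq> {x \<in> carrier M. f x \<ominus>\<^bsub>N\<^esub> g x = \<zero>\<^bsub>N\<^esub>}"
    using assms(5,7) lhom_closed[OF assms(4)] by (auto simp: N.M.r_neg N.M.minus_eq)
  ultimately have "hull R M X \<subseteq> {x \<in> carrier M. f x \<ominus>\<^bsub>N\<^esub> g x = \<zero>\<^bsub>N\<^esub>}" by (rule hull_min)
  then have "f x \<ominus>\<^bsub>N\<^esub> g x = \<zero>\<^bsub>N\<^esub>" "x \<in> carrier M" using assms(6) hull_sub by auto
  thus ?thesis using lhom_closed[OF assms(3)] lhom_closed[OF assms(4)]
    by (simp add: N.M.minus_zero_iff)
qed


section \<open>Quotient modules\<close>

definition cls :: "('a,'m) module \<Rightarrow> 'm set \<Rightarrow> 'm \<Rightarrow> 'm set" where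
  "cls M S x = {y \<in> carrier M. y \<ominus>\<^bsub>M\<^esub> x \<in> S}"

definition qmod :: "('a,'m) module \<Rightarrow> 'm set \<Rightarrow> ('a, 'm set) module" where
  "qmod M S = \<lparr>carrier = cls M S ` carrier M, mult = (\<lambda>A B. undefined), one = undefined,
     zero = cls M S \<zero>\<^bsub>M\<^esub>,
     add = (\<lambda>A B. \<Union>x\<in>A. \<Union>y\<in>B. cls M S (x \<oplus>\<^bsub>M\<^esub> y)),
     smult = (\<lambda>a A. \<Union>x\<in>A. cls M S (a \<odot>\<^bsub>M\<^esub> x))\<rparr>"

definition qrep :: "'m set \<Rightarrow> 'm" where "qrep A = (SOME x. x \<in> A)"

locale qctx = lmodule R M for R :: "'a ring" and M :: "('a,'m) module" +
  fixes S assumes S: "lsubmod R M S"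
begin

lemma S_sub: "S \<subseteq> carrier M" using S by (simp add: lsubmod_def)

lemma cls_self: "x \<in> carrier M \<Longrightarrow> x \<in> cls M S x"
  using S by (simp add: cls_def M.r_neg M.minus_eq lsubmod_def)

lemma cls_eq: "x \<in> carrier M \<Longrightarrow> y \<in> carrier M \<Longrightarrow> cls M S x = cls M S y \<longleftrightarrow> x \<ominus>\<^bsub>M\<^esub> y \<in> S"
proof
  assume xy: "x \<in> carrier M" "y \<in> carrier M"
  {
    assume "cls M S x = cls M S y"
    thus "x \<ominus>\<^bsub>M\<^esub> y \<in> S" using cls_self[OF xy(1)] by (auto simp: cls_def)
  }
  assume d: "x \<ominus>\<^bsub>M\<^esub> y \<in> S"
  show "cls M S x = cls M S y"
  proof (auto simp: cls_def)
    fix z assume z: "z \<in> carrier M" "z \<ominus>\<^bsub>M\<^esub> x \<in> S"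
    have "z \<ominus>\<^bsub>M\<^esub> y = (z \<ominus>\<^bsub>M\<^esub> x) \<oplus>\<^bsub>M\<^esub> (x \<ominus>\<^bsub>M\<^esub> y)" using z xy
      by (simp only: M.t1)
    thus "z \<ominus>\<^bsub>M\<^esub> y \<in> S" using lsubmod_add[OF S z(2) d] by (simp only:)
  next
    fix z assume z: "z \<in> carrier M" "z \<ominus>\<^bsub>M\<^esub> y \<in> S"
    have "z \<ominus>\<^bsub>M\<^esub> x = (z \<ominus>\<^bsub>M\<^esub> y) \<ominus>\<^bsub>M\<^esub> (x \<ominus>\<^bsub>M\<^esub> y)" using z xy
      by (simp only: M.t2)
    thus "z \<ominus>\<^bsub>M\<^esub> x \<in> S" using lsubmod_minus[OF lm S z(2) d] by (simp only:)
  qed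
qed

lemma cls_mem: "x \<in> carrier M \<Longrightarrow> y \<in> cls M S x \<Longrightarrow> y \<in> carrier M \<and> cls M S y = cls M S x"
  using cls_eq by (auto simp: cls_def)

lemma cls_mem_iff: "x \<in> carrier M \<Longrightarrow> y \<in> carrier M \<Longrightarrow> y \<in> cls M S x \<longleftrightarrow> cls M S y = cls M S x"
  using cls_eq by (auto simp: cls_def)

lemma union_cls:
  assumes "x0 \<in> carrier M" "\<And>x. x \<in> cls M S x0 \<Longrightarrow> f x \<in> carrier M \<and> cls M S (f x) = cls M S (f x0)"
  shows "(\<Union>x\<in>cls M S x0. cls M S (f x)) = cls M S (f x0)"
proof
  show "(\<Union>x\<in>cls M S x0. cls M S (f x)) \<subseteq> cls M S (f x0)" using assms(2) by blast
  show "cls M S (f x0) \<subseteq> (\<Union>x\<in>cls M S x0. cls M S (f x))" using cls_self[OF assms(1)] by blast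
qed

lemma cls_zero: "cls M S \<zero>\<^bsub>M\<^esub> = S"
  using S_sub by (auto simp: cls_def M.minus_eq M.add.inv_one)

lemma qcarrier[simp]: "carrier (qmod M S) = cls M S ` carrier M" by (simp add: qmod_def)
lemma qzero[simp]: "\<zero>\<^bsub>qmod M S\<^esub> = cls M S \<zero>\<^bsub>M\<^esub>" by (simp add: qmod_def)

lemma qadd:
  assumes "x \<in> carrier M" "y \<in> carrier M"
  shows "cls M S x \<oplus>\<^bsub>qmod M S\<^esub> cls M S y = cls M S (x \<oplus>\<^bsub>M\<^esub> y)"
proof -
  have "(\<Union>u\<in>cls M S x. \<Union>v\<in>cls M S y. cls M S (u \<oplus>\<^bsub>M\<^esub> v)) = (\<Union>u\<in>cls M S x. cls M S (u \<oplus>\<^bsub>M\<^esub> y))"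
  proof (rule SUP_cong[OF refl])
    fix u assume u: "u \<in> cls M S x"
    hence uc: "u \<in> carrier M" by (simp add: cls_def)
    show "(\<Union>v\<in>cls M S y. cls M S (u \<oplus>\<^bsub>M\<^esub> v)) = cls M S (u \<oplus>\<^bsub>M\<^esub> y)"
    proof (rule union_cls[OF assms(2)])
      fix v assume v: "v \<in> cls M S y"
      hence "v \<in> carrier M" "v \<ominus>\<^bsub>M\<^esub> y \<in> S" by (simp_all add: cls_def)
      moreover have "(u \<oplus>\<^bsub>M\<^esub> v) \<ominus>\<^bsub>M\<^esub> (u \<oplus>\<^bsub>M\<^esub> y) = v \<ominus>\<^bsub>M\<^esub> y" using uc \<open>v \<in> carrier M\<close> assms
        by (simp only: M.t3)
      ultimately show "u \<oplus>\<^bsub>M\<^esub> v \<in> carrier M \<and> cls M S (u \<oplus>\<^bsub>M\<^esub> v) = cls M S (u \<oplus>\<^bsub>M\<^esub> y)"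
        using uc assms cls_eq by auto
    qed
  qed
  also have "\<dots> = cls M S (x \<oplus>\<^bsub>M\<^esub> y)"
  proof (rule union_cls[OF assms(1)])
    fix u assume u: "u \<in> cls M S x"
    hence "u \<in> carrier M" "u \<ominus>\<^bsub>M\<^esub> x \<in> S" by (simp_all add: cls_def)
    moreover have "(u \<oplus>\<^bsub>M\<^esub> y) \<ominus>\<^bsub>M\<^esub> (x \<oplus>\<^bsub>M\<^esub> y) = u \<ominus>\<^bsub>M\<^esub> x" using \<open>u \<in> carrier M\<close> assms
      by (simp only: M.t4)
    ultimately show "u \<oplus>\<^bsub>M\<^esub> y \<in> carrier M \<and> cls M S (u \<oplus>\<^bsub>M\<^esub> y) = cls M S (x \<oplus>\<^bsub>M\<^esub> y)"
      using assms cls_eq by auto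
  qed
  finally show ?thesis by (simp add: qmod_def)
qed

lemma qsmult:
  assumes "a \<in> carrier R" "x \<in> carrier M"
  shows "a \<odot>\<^bsub>qmod M S\<^esub> cls M S x = cls M S (a \<odot>\<^bsub>M\<^esub> x)"
proof -
  have "(\<Union>u\<in>cls M S x. cls M S (a \<odot>\<^bsub>M\<^esub> u)) = cls M S (a \<odot>\<^bsub>M\<^esub> x)"
  proof (rule union_cls[OF assms(2)])
    fix u assume u: "u \<in> cls M S x"
    hence "u \<in> carrier M" "u \<ominus>\<^bsub>M\<^esub> x \<in> S" by (simp_all add: cls_def)
    moreover have "a \<odot>\<^bsub>M\<^esub> u \<ominus>\<^bsub>M\<^esub> a \<odot>\<^bsub>M\<^esub> x = a \<odot>\<^bsub>M\<^esub> (u \<ominus>\<^bsub>M\<^esub> x)" using \<open>u \<in> carrier M\<close> assms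
      by (simp add: smult_minus)
    ultimately show "a \<odot>\<^bsub>M\<^esub> u \<in> carrier M \<and> cls M S (a \<odot>\<^bsub>M\<^esub> u) = cls M S (a \<odot>\<^bsub>M\<^esub> x)"
      using assms cls_eq lsubmod_smult[OF S] by auto
  qed
  thus ?thesis by (simp add: qmod_def)
qed

lemma qmod_lmod: "lmod R (qmod M S)"
proof -
  have ag: "abelian_group (qmod M S)"
  proof (rule abelian_groupI)
    fix A B assume "A \<in> carrier (qmod M S)" "B \<in> carrier (qmod M S)"
    then obtain x y where "x \<in> carrier M" "y \<in> carrier M" "A = cls M S x" "B = cls M S y" by auto
    thus "A \<oplus>\<^bsub>qmod M S\<^esub> B \<in> carrier (qmod M S)" by (simp add: qadd)
    show "A \<oplus>\<^bsub>qmod M S\<^esub> B = B \<oplus>\<^bsub>qmod M S\<^esub> A" using \<open>A = _\<close> \<open>B = _\<close> \<open>x \<in> _\<close> \<open>y \<in> _\<close>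
      by (simp add: qadd M.a_comm)
  next
    show "\<zero>\<^bsub>qmod M S\<^esub> \<in> carrier (qmod M S)" by simp
  next
    fix A B C assume "A \<in> carrier (qmod M S)" "B \<in> carrier (qmod M S)" "C \<in> carrier (qmod M S)"
    then obtain x y z where "x \<in> carrier M" "y \<in> carrier M" "z \<in> carrier M"
      "A = cls M S x" "B = cls M S y" "C = cls M S z" by auto
    thus "A \<oplus>\<^bsub>qmod M S\<^esub> B \<oplus>\<^bsub>qmod M S\<^esub> C = A \<oplus>\<^bsub>qmod M S\<^esub> (B \<oplus>\<^bsub>qmod M S\<^esub> C)"
      by (simp add: qadd M.a_assoc)
  next
    fix A assume "A \<in> carrier (qmod M S)"
    then obtain x where x: "x \<in> carrier M" "A = cls M S x" by auto
    thus "\<zero>\<^bsub>qmod M S\<^esub> \<oplus>\<^bsub>qmod M S\<^esub> A = A" by (simp add: qadd)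
    show "\<exists>B\<in>carrier (qmod M S). B \<oplus>\<^bsub>qmod M S\<^esub> A = \<zero>\<^bsub>qmod M S\<^esub>"
      using x by (intro bexI[of _ "cls M S (\<ominus>\<^bsub>M\<^esub> x)"]) (auto simp: qadd M.l_neg)
  qed
  show ?thesis unfolding lmod_def
  proof (intro conjI ballI)
    show "ring R" ..
    show "abelian_group (qmod M S)" by (rule ag)
    fix a A assume "a \<in> carrier R" "A \<in> carrier (qmod M S)"
    then obtain x where x: "x \<in> carrier M" "A = cls M S x" by auto
    show "a \<odot>\<^bsub>qmod M S\<^esub> A \<in> carrier (qmod M S)" using x \<open>a \<in> _\<close> by (simp add: qsmult)
  next
    fix a A B assume "a \<in> carrier R" "A \<in> carrier (qmod M S)" "B \<in> carrier (qmod M S)"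
    then obtain x y where "x \<in> carrier M" "y \<in> carrier M" "A = cls M S x" "B = cls M S y" by auto
    thus "a \<odot>\<^bsub>qmod M S\<^esub> (A \<oplus>\<^bsub>qmod M S\<^esub> B) = a \<odot>\<^bsub>qmod M S\<^esub> A \<oplus>\<^bsub>qmod M S\<^esub> a \<odot>\<^bsub>qmod M S\<^esub> B"
      using \<open>a \<in> _\<close> by (simp add: qadd qsmult smult_add)
  next
    fix a b A assume "a \<in> carrier R" "b \<in> carrier R" "A \<in> carrier (qmod M S)"
    then obtain x where "x \<in> carrier M" "A = cls M S x" by auto
    thus "(a \<oplus>\<^bsub>R\<^esub> b) \<odot>\<^bsub>qmod M S\<^esub> A = a \<odot>\<^bsub>qmod M S\<^esub> A \<oplus>\<^bsub>qmod M S\<^esub> b \<odot>\<^bsub>qmod M S\<^esub> A"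
      using \<open>a \<in> _\<close> \<open>b \<in> _\<close> by (simp add: qadd qsmult add_smult)
    show "(a \<otimes>\<^bsub>R\<^esub> b) \<odot>\<^bsub>qmod M S\<^esub> A = a \<odot>\<^bsub>qmod M S\<^esub> (b \<odot>\<^bsub>qmod M S\<^esub> A)"
      using \<open>a \<in> _\<close> \<open>b \<in> _\<close> \<open>x \<in> _\<close> \<open>A = _\<close> by (simp add: qsmult mult_smult)
  next
    fix A assume "A \<in> carrier (qmod M S)"
    then obtain x where "x \<in> carrier M" "A = cls M S x" by auto
    thus "\<one>\<^bsub>R\<^esub> \<odot>\<^bsub>qmod M S\<^esub> A = A" by (simp add: qsmult)
  qed
qed

lemma qproj_lhom: "cls M S \<in> lhom R M (qmod M S)"
  by (rule lhomI) (auto simp: qadd qsmult)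

lemma qproj_kernel: "x \<in> carrier M \<Longrightarrow> cls M S x = \<zero>\<^bsub>qmod M S\<^esub> \<longleftrightarrow> x \<in> S"
  using cls_eq[of x "\<zero>\<^bsub>M\<^esub>"] by (simp add: M.minus_eq)

lemma qrep: "A \<in> carrier (qmod M S) \<Longrightarrow> qrep A \<in> carrier M \<and> cls M S (qrep A) = A"
proof -
  assume "A \<in> carrier (qmod M S)"
  then obtain x where x: "x \<in> carrier M" "A = cls M S x" by auto
  hence "qrep A \<in> A" unfolding qrep_def using cls_self by (metis someI_ex)
  thus ?thesis using cls_mem x by blast
qed

lemma qfactor:
  assumes N: "lmod R N" and h: "h \<in> lhom R M N" and van: "\<And>x. x \<in> S \<Longrightarrow> h x = \<zero>\<^bsub>N\<^esub>"
  shows "(\<lambda>A. h (qrep A)) \<in> lhom R (qmod M S) N"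
    and "\<And>x. x \<in> carrier M \<Longrightarrow> h (qrep (cls M S x)) = h x"
proof -
  interpret N: lmodule R N by (rule lmodule.intro) fact
  show hq: "\<And>x. x \<in> carrier M \<Longrightarrow> h (qrep (cls M S x)) = h x"
  proof -
    fix x assume x: "x \<in> carrier M"
    have r: "qrep (cls M S x) \<in> carrier M" "cls M S (qrep (cls M S x)) = cls M S x" using qrep x by auto
    hence "qrep (cls M S x) \<ominus>\<^bsub>M\<^esub> x \<in> S" using cls_eq x by blast
    hence "h (qrep (cls M S x) \<ominus>\<^bsub>M\<^esub> x) = \<zero>\<^bsub>N\<^esub>" by (rule van)
    hence "h (qrep (cls M S x)) \<ominus>\<^bsub>N\<^esub> h x = \<zero>\<^bsub>N\<^esub>" using lhom_minus[OF lm N h] r x by simp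
    thus "h (qrep (cls M S x)) = h x" using N.M.minus_zero_iff lhom_closed[OF h] r x by blast
  qed
  show "(\<lambda>A. h (qrep A)) \<in> lhom R (qmod M S) N"
  proof (rule lhomI)
    fix A assume "A \<in> carrier (qmod M S)"
    thus "h (qrep A) \<in> carrier N" using qrep lhom_closed[OF h] by blast
  next
    fix A B assume "A \<in> carrier (qmod M S)" "B \<in> carrier (qmod M S)"
    then obtain x y where "x \<in> carrier M" "y \<in> carrier M" "A = cls M S x" "B = cls M S y" by auto
    thus "h (qrep (A \<oplus>\<^bsub>qmod M S\<^esub> B)) = h (qrep A) \<oplus>\<^bsub>N\<^esub> h (qrep B)"
      by (simp add: qadd hq lhom_add[OF h])
  next
    fix a A assume "a \<in> carrier R" "A \<in> carrier (qmod M S)"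
    then obtain x where "x \<in> carrier M" "A = cls M S x" by auto
    thus "h (qrep (a \<odot>\<^bsub>qmod M S\<^esub> A)) = a \<odot>\<^bsub>N\<^esub> h (qrep A)"
      using \<open>a \<in> _\<close> by (simp add: qsmult hq lhom_smult[OF h])
  qed
qed

end


primrec lsum :: "('m,'x) ring_scheme \<Rightarrow> (nat \<Rightarrow> 'm) \<Rightarrow> nat \<Rightarrow> 'm" where
  "lsum X f 0 = \<zero>\<^bsub>X\<^esub>"
| "lsum X f (Suc n) = lsum X f n \<oplus>\<^bsub>X\<^esub> f n"

context abelian_group begin

lemma lsum_closed: "(\<And>i. i < n \<Longrightarrow> f i \<in> carrier G) \<Longrightarrow> lsum G f n \<in> carrier G"
  by (induction n) auto

lemma lsum_cong: "(\<And>i. i < n \<Longrightarrow> f i = g i) \<Longrightarrow> lsum G f n = lsum G g n"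
  by (induction n) auto

lemma lsum_add: "(\<And>i. i < n \<Longrightarrow> f i \<in> carrier G) \<Longrightarrow> (\<And>i. i < n \<Longrightarrow> g i \<in> carrier G) \<Longrightarrow>
   lsum G (\<lambda>i. f i \<oplus> g i) n = lsum G f n \<oplus> lsum G g n"
proof (induction n)
  case (Suc n)
  have c: "lsum G f n \<in> carrier G" "lsum G g n \<in> carrier G" "f n \<in> carrier G" "g n \<in> carrier G"
    using Suc.prems by (auto intro!: lsum_closed)
  show ?case using Suc c by (simp add: a_ac)
qed simp

lemma lsum_zero: "(\<And>i. i < n \<Longrightarrow> f i = \<zero>) \<Longrightarrow> lsum G f n = \<zero>"
  by (induction n) auto

lemma lsum_single: "k < n \<Longrightarrow> (\<And>i. i < n \<Longrightarrow> i \<noteq> k \<Longrightarrow> f i = \<zero>) \<Longrightarrow> f k \<in> carrier G \<Longrightarrow> lsum G f n = f k"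
proof (induction n)
  case (Suc n)
  show ?case
  proof (cases "k = n")
    case True
    hence "lsum G f n = \<zero>" using Suc.prems by (intro lsum_zero) auto
    thus ?thesis using True Suc.prems by simp
  next
    case False
    hence "lsum G f n = f k" using Suc by auto
    moreover have "f n = \<zero>" using Suc.prems False by auto
    ultimately show ?thesis using Suc.prems by simp
  qed
qed simp

lemma lsum_neg: "(\<And>i. i < n \<Longrightarrow> f i \<in> carrier G) \<Longrightarrow> lsum G (\<lambda>i. \<ominus> f i) n = \<ominus> lsum G f n"
proof (induction n)
  case (Suc n)
  have c: "lsum G f n \<in> carrier G" "f n \<in> carrier G" using Suc.prems by (auto intro!: lsum_closed)
  show ?case using Suc c by (simp add: minus_add a_comm)
qed simp

end

lemma lsum_in_sub: "lsubmod R M T \<Longrightarrow> (\<And>i. i < n \<Longrightarrow> f i \<in> T) \<Longrightarrow> lsum M f n \<in> T"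
  by (induction n) (auto simp: lsubmod_def)

lemma lsum_hom: "lmod R M \<Longrightarrow> lmod R N \<Longrightarrow> h \<in> lhom R M N \<Longrightarrow> (\<And>i. i < n \<Longrightarrow> f i \<in> carrier M) \<Longrightarrow>
   h (lsum M f n) = lsum N (\<lambda>i. h (f i)) n"
proof (induction n)
  case 0 thus ?case by (simp add: lhom_zero)
next
  case (Suc n)
  interpret lmodule R M by (rule lmodule.intro) fact
  have "lsum M f n \<in> carrier M" using Suc.prems by (intro M.lsum_closed) auto
  thus ?case using Suc lhom_add[OF Suc.prems(3)] by simp
qed

context lmodule begin
lemma lsum_smult: "a \<in> carrier R \<Longrightarrow> (\<And>i. i < n \<Longrightarrow> f i \<in> carrier M) \<Longrightarrow>
   a \<odot>\<^bsub>M\<^esub> lsum M f n = lsum M (\<lambda>i. a \<odot>\<^bsub>M\<^esub> f i) n"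
proof (induction n)
  case (Suc n)
  have "lsum M f n \<in> carrier M" using Suc.prems by (intro M.lsum_closed) auto
  thus ?case using Suc by (simp add: smult_add)
qed simp
end

section \<open>Free modules\<close>

lemma freemod_simps[simp]:
  "carrier (freemod R n) = {v. (\<forall>i. v i \<in> carrier R) \<and> (\<forall>i\<ge>n. v i = \<zero>\<^bsub>R\<^esub>)}"
  "\<zero>\<^bsub>freemod R n\<^esub> = (\<lambda>i. \<zero>\<^bsub>R\<^esub>)"
  "v \<oplus>\<^bsub>freemod R n\<^esub> w = (\<lambda>i. v i \<oplus>\<^bsub>R\<^esub> w i)"
  "a \<odot>\<^bsub>freemod R n\<^esub> v = (\<lambda>i. a \<otimes>\<^bsub>R\<^esub> v i)"
  by (simp_all add: freemod_def)

lemma freemod_lmod: "ring R \<Longrightarrow> lmod R (freemod R n)"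
proof -
  assume "ring R"
  then interpret R: ring R .
  have "abelian_group (freemod R n)"
  proof (rule abelian_groupI)
    fix v assume v: "v \<in> carrier (freemod R n)"
    show "\<exists>w\<in>carrier (freemod R n). w \<oplus>\<^bsub>freemod R n\<^esub> v = \<zero>\<^bsub>freemod R n\<^esub>"
      using v by (intro bexI[of _ "\<lambda>i. \<ominus>\<^bsub>R\<^esub> v i"]) (auto simp: R.l_neg)
  qed (auto simp: R.a_ac)
  thus ?thesis unfolding lmod_def
    by (auto simp: R.r_distr R.l_distr R.m_assoc \<open>ring R\<close>)
qed

lemma ring_lmod_simps[simp]:
  "carrier (ring_lmod R) = carrier R" "\<zero>\<^bsub>ring_lmod R\<^esub> = \<zero>\<^bsub>R\<^esub>"
  "x \<oplus>\<^bsub>ring_lmod R\<^esub> y = x \<oplus>\<^bsub>R\<^esub> y" "a \<odot>\<^bsub>ring_lmod R\<^esub> x = a \<otimes>\<^bsub>R\<^esub> x"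
  by (simp_all add: ring_lmod_def)

lemma ring_lmod_lmod: "ring R \<Longrightarrow> lmod R (ring_lmod R)"
proof -
  assume "ring R"
  then interpret R: ring R .
  have "abelian_group (ring_lmod R)"
  proof (rule abelian_groupI)
    fix v assume v: "v \<in> carrier (ring_lmod R)"
    show "\<exists>w\<in>carrier (ring_lmod R). w \<oplus>\<^bsub>ring_lmod R\<^esub> v = \<zero>\<^bsub>ring_lmod R\<^esub>"
      using v by (intro bexI[of _ "\<ominus>\<^bsub>R\<^esub> v"]) (auto simp: R.l_neg)
  qed (auto simp: R.a_ac)
  thus ?thesis unfolding lmod_def
    by (auto simp: R.r_distr R.l_distr R.m_assoc \<open>ring R\<close>)
qed

definition ebas :: "'a ring \<Rightarrow> nat \<Rightarrow> nat \<Rightarrow> 'a" where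
  "ebas R k = (\<lambda>i. if i = k then \<one>\<^bsub>R\<^esub> else \<zero>\<^bsub>R\<^esub>)"

definition fmap :: "'a ring \<Rightarrow> ('a,'m) module \<Rightarrow> (nat \<Rightarrow> 'm) \<Rightarrow> nat \<Rightarrow> (nat \<Rightarrow> 'a) \<Rightarrow> 'm" where
  "fmap R X xs n v = lsum X (\<lambda>i. v i \<odot>\<^bsub>X\<^esub> xs i) n"

lemma ebas_carrier: "ring R \<Longrightarrow> k < n \<Longrightarrow> ebas R k \<in> carrier (freemod R n)"
  by (auto simp: ebas_def ring.ring_simprules)

lemma fmap_lhom:
  assumes X: "lmod R X" and xs: "\<And>i. i < n \<Longrightarrow> xs i \<in> carrier X"
  shows "fmap R X xs n \<in> lhom R (freemod R n) X"
proof -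
  interpret lmodule R X by (rule lmodule.intro) fact
  show ?thesis
  proof (rule lhomI)
    fix v assume "v \<in> carrier (freemod R n)"
    thus "fmap R X xs n v \<in> carrier X" unfolding fmap_def using xs by (intro M.lsum_closed) auto
  next
    fix v w assume vw: "v \<in> carrier (freemod R n)" "w \<in> carrier (freemod R n)"
    have "fmap R X xs n (v \<oplus>\<^bsub>freemod R n\<^esub> w) = lsum X (\<lambda>i. v i \<odot>\<^bsub>X\<^esub> xs i \<oplus>\<^bsub>X\<^esub> w i \<odot>\<^bsub>X\<^esub> xs i) n"
      unfolding fmap_def using vw xs by (intro M.lsum_cong) (auto simp: add_smult)
    also have "\<dots> = fmap R X xs n v \<oplus>\<^bsub>X\<^esub> fmap R X xs n w"
      unfolding fmap_def using vw xs by (intro M.lsum_add) auto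
    finally show "fmap R X xs n (v \<oplus>\<^bsub>freemod R n\<^esub> w) = fmap R X xs n v \<oplus>\<^bsub>X\<^esub> fmap R X xs n w" .
  next
    fix a v assume av: "a \<in> carrier R" "v \<in> carrier (freemod R n)"
    have "fmap R X xs n (a \<odot>\<^bsub>freemod R n\<^esub> v) = lsum X (\<lambda>i. a \<odot>\<^bsub>X\<^esub> (v i \<odot>\<^bsub>X\<^esub> xs i)) n"
      unfolding fmap_def using av xs by (intro M.lsum_cong) (auto simp: mult_smult)
    also have "\<dots> = a \<odot>\<^bsub>X\<^esub> fmap R X xs n v"
      unfolding fmap_def using av xs by (intro lsum_smult[symmetric]) auto
    finally show "fmap R X xs n (a \<odot>\<^bsub>freemod R n\<^esub> v) = a \<odot>\<^bsub>X\<^esub> fmap R X xs n v" .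
  qed
qed

lemma fmap_ebas:
  assumes X: "lmod R X" and xs: "\<And>i. i < n \<Longrightarrow> xs i \<in> carrier X" and k: "k < n"
  shows "fmap R X xs n (ebas R k) = xs k"
proof -
  interpret lmodule R X by (rule lmodule.intro) fact
  show ?thesis unfolding fmap_def
    by (subst M.lsum_single[OF k]) (use xs k in \<open>auto simp: ebas_def\<close>)
qed

lemma freemod_decomp:
  assumes R: "ring R" and v: "v \<in> carrier (freemod R n)"
  shows "v = lsum (freemod R n) (\<lambda>i. v i \<odot>\<^bsub>freemod R n\<^esub> ebas R i) n"
proof -
  interpret R: ring R by fact
  have ev: "lsum (freemod R m) f k j = lsum R (\<lambda>i. f i j) k" for m f k j
    by (induction k) auto
  show ?thesis
  proof
    fix j
    show "v j = lsum (freemod R n) (\<lambda>i. v i \<odot>\<^bsub>freemod R n\<^esub> ebas R i) n j"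
    proof (cases "j < n")
      case True
      have "lsum R (\<lambda>i. v i \<otimes>\<^bsub>R\<^esub> ebas R i j) n = v j \<otimes>\<^bsub>R\<^esub> ebas R j j"
        using True v by (intro R.lsum_single) (auto simp: ebas_def)
      thus ?thesis using v by (simp add: ev ebas_def)
    next
      case False
      have "lsum R (\<lambda>i. v i \<otimes>\<^bsub>R\<^esub> ebas R i j) n = \<zero>\<^bsub>R\<^esub>"
        using False v by (intro R.lsum_zero) (auto simp: ebas_def)
      thus ?thesis using v False by (simp add: ev)
    qed
  qed
qed

lemma freemod_hull:
  assumes R: "ring R"
  shows "carrier (freemod R n) = hull R (freemod R n) (ebas R ` {..<n})"
proof
  show "hull R (freemod R n) (ebas R ` {..<n}) \<subseteq> carrier (freemod R n)" by (rule hull_sub)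
  show "carrier (freemod R n) \<subseteq> hull R (freemod R n) (ebas R ` {..<n})"
  proof
    fix v assume v: "v \<in> carrier (freemod R n)"
    have sub: "lsubmod R (freemod R n) (hull R (freemod R n) (ebas R ` {..<n}))"
      by (rule hull_lsubmod[OF freemod_lmod[OF R]])
    have inc: "ebas R ` {..<n} \<subseteq> hull R (freemod R n) (ebas R ` {..<n})"
      by (rule hull_incl) (use ebas_carrier[OF R] in auto)
    have "lsum (freemod R n) (\<lambda>i. v i \<odot>\<^bsub>freemod R n\<^esub> ebas R i) n \<in> hull R (freemod R n) (ebas R ` {..<n})"
      by (rule lsum_in_sub[OF sub]) (use inc v lsubmod_smult[OF sub] in auto)
    thus "v \<in> hull R (freemod R n) (ebas R ` {..<n})" using freemod_decomp[OF R v] by simp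
  qed
qed

lemma freemod_hom_eq:
  assumes R: "ring R" and X: "lmod R X" and f: "f \<in> lhom R (freemod R n) X" and g: "g \<in> lhom R (freemod R n) X"
    and eq: "\<And>k. k < n \<Longrightarrow> f (ebas R k) = g (ebas R k)" and v: "v \<in> carrier (freemod R n)"
  shows "f v = g v"
proof -
  have h: "v \<in> hull R (freemod R n) (ebas R ` {..<n})" using v freemod_hull[OF R, of n] by (simp only:)
  show ?thesis
    by (rule hull_eq_on[OF freemod_lmod[OF R] X f g _ h]) (use eq ebas_carrier[OF R] in auto)
qed


declare freemod_simps[simp del]

lemma (in abelian_group) sub_add_cancel: "x \<in> carrier G \<Longrightarrow> y \<in> carrier G \<Longrightarrow> x \<ominus> y \<oplus> y = x"
  by (simp add: minus_eq a_assoc l_neg)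

lemma lmod_ring: "lmod R M \<Longrightarrow> ring R" by (simp add: lmod_def)

lemma hom_eq_of_kernel:
  assumes A: "lmod R A" and B: "lmod R B" and X: "lmod R X" and p: "p \<in> lhom R A B"
    and h: "h \<in> lhom R A X" and van: "\<And>x. x \<in> carrier A \<Longrightarrow> p x = \<zero>\<^bsub>B\<^esub> \<Longrightarrow> h x = \<zero>\<^bsub>X\<^esub>"
    and xy: "x \<in> carrier A" "y \<in> carrier A" "p x = p y"
  shows "h x = h y"
proof -
  interpret A: lmodule R A by (rule lmodule.intro) fact
  interpret B: lmodule R B by (rule lmodule.intro) fact
  interpret X: lmodule R X by (rule lmodule.intro) fact
  have "p (x \<ominus>\<^bsub>A\<^esub> y) = \<zero>\<^bsub>B\<^esub>" using lhom_minus[OF A B p xy(1,2)] xy lhom_closed[OF p]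
    by (simp add: B.M.minus_zero_iff)
  hence "h (x \<ominus>\<^bsub>A\<^esub> y) = \<zero>\<^bsub>X\<^esub>" using van xy by simp
  hence "h x \<ominus>\<^bsub>X\<^esub> h y = \<zero>\<^bsub>X\<^esub>" using lhom_minus[OF A X h xy(1,2)] by simp
  thus ?thesis using X.M.minus_zero_iff lhom_closed[OF h] xy by blast
qed

lemma surj_factor:
  assumes A: "lmod R A" and B: "lmod R B" and X: "lmod R X" and p: "p \<in> lhom R A B"
    and ps: "p ` carrier A = carrier B"
    and h: "h \<in> lhom R A X" and van: "\<And>x. x \<in> carrier A \<Longrightarrow> p x = \<zero>\<^bsub>B\<^esub> \<Longrightarrow> h x = \<zero>\<^bsub>X\<^esub>"
  shows "(\<lambda>z. h (SOME x. x \<in> carrier A \<and> p x = z)) \<in> lhom R B X"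
    and "\<And>x. x \<in> carrier A \<Longrightarrow> h (SOME y. y \<in> carrier A \<and> p y = p x) = h x"
proof -
  interpret A: lmodule R A by (rule lmodule.intro) fact
  interpret B: lmodule R B by (rule lmodule.intro) fact
  interpret X: lmodule R X by (rule lmodule.intro) fact
  define s where "s z = (SOME x. x \<in> carrier A \<and> p x = z)" for z
  have s: "s z \<in> carrier A \<and> p (s z) = z" if "z \<in> carrier B" for z
  proof -
    have "z \<in> p ` carrier A" using that ps by simp
    then obtain x where x: "x \<in> carrier A" "z = p x" by (rule imageE)
    show ?thesis unfolding s_def by (rule someI[of "\<lambda>y. y \<in> carrier A \<and> p y = z" x]) (use x in simp)
  qed
  have eq: "h x = h y" if "x \<in> carrier A" "y \<in> carrier A" "p x = p y" for x y
    by (rule hom_eq_of_kernel[OF A B X p h van that]) auto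
  show hs: "\<And>x. x \<in> carrier A \<Longrightarrow> h (SOME y. y \<in> carrier A \<and> p y = p x) = h x"
  proof -
    fix x assume x: "x \<in> carrier A"
    have "s (p x) \<in> carrier A \<and> p (s (p x)) = p x" by (rule s) (rule lhom_closed[OF p x])
    hence "h (s (p x)) = h x" using eq x by blast
    thus "h (SOME y. y \<in> carrier A \<and> p y = p x) = h x" unfolding s_def .
  qed
  show "(\<lambda>z. h (SOME x. x \<in> carrier A \<and> p x = z)) \<in> lhom R B X"
    unfolding s_def[symmetric]
  proof (rule lhomI)
    fix z assume "z \<in> carrier B" thus "h (s z) \<in> carrier X" using s lhom_closed[OF h] by blast
  next
    fix z w assume zw: "z \<in> carrier B" "w \<in> carrier B"
    have "h (s (z \<oplus>\<^bsub>B\<^esub> w)) = h (s z \<oplus>\<^bsub>A\<^esub> s w)"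
      by (rule eq) (use s zw lhom_add[OF p] in auto)
    thus "h (s (z \<oplus>\<^bsub>B\<^esub> w)) = h (s z) \<oplus>\<^bsub>X\<^esub> h (s w)" using lhom_add[OF h] s zw by simp
  next
    fix a z assume az: "a \<in> carrier R" "z \<in> carrier B"
    have "h (s (a \<odot>\<^bsub>B\<^esub> z)) = h (a \<odot>\<^bsub>A\<^esub> s z)"
      by (rule eq) (use s az lhom_smult[OF p] in auto)
    thus "h (s (a \<odot>\<^bsub>B\<^esub> z)) = a \<odot>\<^bsub>X\<^esub> h (s z)" using lhom_smult[OF h] s az by simp
  qed
qed

lemma lfpE:
  assumes "lfp R N"
  obtains n q G where "q \<in> lhom R (freemod R n) N" "q ` carrier (freemod R n) = carrier N"
    "finite G" "G \<subseteq> carrier (freemod R n)"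
    "{v \<in> carrier (freemod R n). q v = \<zero>\<^bsub>N\<^esub>} = hull R (freemod R n) G"
proof -
  have N: "lmod R N" using assms by (simp add: lfp_def)
  have R: "ring R" using lmod_ring[OF N] .
  from assms obtain n q where q: "q \<in> lhom R (freemod R n) N" "q ` carrier (freemod R n) = carrier N"
    "lfingen R (freemod R n) {v \<in> carrier (freemod R n). q v = \<zero>\<^bsub>N\<^esub>}" by (auto simp: lfp_def)
  then obtain G where "finite G" "G \<subseteq> carrier (freemod R n)"
    "{v \<in> carrier (freemod R n). q v = \<zero>\<^bsub>N\<^esub>} = hull R (freemod R n) G"
    using q(3) unfolding lfingen_hull[OF freemod_lmod[OF R]] by blast
  thus ?thesis using q that by blast
qed

lemma lfpI:
  assumes N: "lmod R N" and q: "q \<in> lhom R (freemod R n) N" "q ` carrier (freemod R n) = carrier N"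
    and G: "finite G" "G \<subseteq> carrier (freemod R n)"
    "{v \<in> carrier (freemod R n). q v = \<zero>\<^bsub>N\<^esub>} = hull R (freemod R n) G"
  shows "lfp R N"
proof -
  have R: "ring R" using lmod_ring[OF N] .
  have "lfingen R (freemod R n) {v \<in> carrier (freemod R n). q v = \<zero>\<^bsub>N\<^esub>}"
    unfolding lfingen_hull[OF freemod_lmod[OF R]] using G by blast
  thus ?thesis unfolding lfp_def using N q by blast
qed

lemma coker:
  assumes N: "lfp R N" and S: "lfingen R N S"
  obtains C :: "'a fpmod" and c where "lfp R C" "c \<in> lhom R N C" "c ` carrier N = carrier C"
    "\<And>y. y \<in> carrier N \<Longrightarrow> c y = \<zero>\<^bsub>C\<^esub> \<longleftrightarrow> y \<in> S"
proof -
  have Nl: "lmod R N" using N by (simp add: lfp_def)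
  have R: "ring R" using lmod_ring[OF Nl] .
  interpret N: lmodule R N by (rule lmodule.intro) fact
  obtain n q G where q: "q \<in> lhom R (freemod R n) N" "q ` carrier (freemod R n) = carrier N"
    and G: "finite G" "G \<subseteq> carrier (freemod R n)"
    "{v \<in> carrier (freemod R n). q v = \<zero>\<^bsub>N\<^esub>} = hull R (freemod R n) G"
    by (rule lfpE[OF N])
  let ?F = "freemod R n"
  have F: "lmod R ?F" by (rule freemod_lmod[OF R])
  interpret F: lmodule R ?F by (rule lmodule.intro) fact
  have Ssub: "lsubmod R N S" using S by (simp add: lfingen_def)
  obtain Y where Y: "finite Y" "Y \<subseteq> carrier N" "S = hull R N Y" using S unfolding lfingen_hull[OF Nl] by blast
  define l where "l y = (SOME v. v \<in> carrier ?F \<and> q v = y)" for y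
  have l: "l y \<in> carrier ?F \<and> q (l y) = y" if "y \<in> carrier N" for y
  proof -
    have "y \<in> q ` carrier ?F" using that q(2) by simp
    then obtain x where x: "x \<in> carrier ?F" "y = q x" by (rule imageE)
    show ?thesis unfolding l_def by (rule someI[of "\<lambda>v. v \<in> carrier ?F \<and> q v = y" x]) (use x in simp)
  qed
  define Z where "Z = l ` Y"
  have Zc: "Z \<subseteq> carrier ?F" using l Y(2) unfolding Z_def by (auto simp: subset_iff)
  have "q ` Z = (\<lambda>y. q (l y)) ` Y" by (simp add: Z_def image_image)
  also have "\<dots> = (\<lambda>y. y) ` Y" by (rule image_cong[OF refl]) (use l Y(2) in \<open>auto simp: subset_iff\<close>)
  finally have qZ: "q ` Z = Y" by simp
  define T where "T = {v \<in> carrier ?F. q v \<in> S}"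
  have Tsub: "lsubmod R ?F T" unfolding T_def by (rule lsubmod_preimage[OF F Nl q(1) Ssub])
  have T: "T = hull R ?F (G \<union> Z)"
  proof
    have GK: "g \<in> carrier ?F \<and> q g = \<zero>\<^bsub>N\<^esub>" if "g \<in> G" for g
      using hull_incl[OF G(2)] G(3) that by blast
    have "G \<subseteq> T" using GK lsubmod_zero[OF Ssub] unfolding T_def by auto
    moreover have "Z \<subseteq> T" using Zc qZ Y(3) hull_incl[OF Y(2), of R] unfolding T_def by blast
    ultimately show "hull R ?F (G \<union> Z) \<subseteq> T" by (intro hull_min[OF Tsub]) auto
  next
    show "T \<subseteq> hull R ?F (G \<union> Z)"
    proof
      fix v assume v: "v \<in> T"
      hence vc: "v \<in> carrier ?F" and "q v \<in> S" unfolding T_def by auto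
      hence "q v \<in> q ` hull R ?F Z" using hull_image[OF F Nl q(1) Zc] qZ Y(3) by simp
      then obtain w where w: "w \<in> hull R ?F Z" "q w = q v" by auto
      have wc: "w \<in> carrier ?F" using w(1) hull_sub[of R ?F Z] by (rule subsetD[rotated])
      have hs: "lsubmod R ?F (hull R ?F (G \<union> Z))" by (rule hull_lsubmod[OF F])
      have m: "v \<ominus>\<^bsub>?F\<^esub> w \<in> carrier ?F" using vc wc by simp
      have "q (v \<ominus>\<^bsub>?F\<^esub> w) = \<zero>\<^bsub>N\<^esub>"
        using lhom_minus[OF F Nl q(1) vc wc] w vc lhom_closed[OF q(1)] by (simp add: N.M.minus_zero_iff)
      hence "v \<ominus>\<^bsub>?F\<^esub> w \<in> hull R ?F G" using m G(3) by blast
      hence a: "v \<ominus>\<^bsub>?F\<^esub> w \<in> hull R ?F (G \<union> Z)" using hull_mono[of G "G \<union> Z"] by blast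
      have b: "w \<in> hull R ?F (G \<union> Z)" using w(1) hull_mono[of Z "G \<union> Z"] by blast
      have "v = (v \<ominus>\<^bsub>?F\<^esub> w) \<oplus>\<^bsub>?F\<^esub> w" using vc wc
        by (simp add: F.M.sub_add_cancel)
      thus "v \<in> hull R ?F (G \<union> Z)" using lsubmod_add[OF hs a b] by simp
    qed
  qed
  interpret Q: qctx R ?F T by (rule qctx.intro[OF lmodule.intro[OF F]]) (rule qctx_axioms.intro[OF Tsub])
  let ?C = "qmod ?F T"
  have Cl: "lmod R ?C" by (rule Q.qmod_lmod)
  have Cp: "lfp R ?C"
  proof (rule lfpI[OF Cl Q.qproj_lhom])
    show "cls ?F T ` carrier ?F = carrier ?C" by simp
    show "finite (G \<union> Z)" using G(1) Y(1) Z_def by simp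
    show "G \<union> Z \<subseteq> carrier ?F" using G(2) Zc by simp
    show "{v \<in> carrier ?F. cls ?F T v = \<zero>\<^bsub>?C\<^esub>} = hull R ?F (G \<union> Z)"
      using Q.qproj_kernel T Tsub lsubmod_sub by blast
  qed
  have van: "\<And>x. x \<in> carrier ?F \<Longrightarrow> q x = \<zero>\<^bsub>N\<^esub> \<Longrightarrow> cls ?F T x = \<zero>\<^bsub>?C\<^esub>"
    using Q.qproj_kernel lsubmod_zero[OF Ssub] unfolding T_def by simp
  define c where "c = (\<lambda>z. cls ?F T (SOME x. x \<in> carrier ?F \<and> q x = z))"
  have c: "c \<in> lhom R N ?C" unfolding c_def by (rule surj_factor(1)[OF F Nl Cl q Q.qproj_lhom van])
  have cq: "c (q x) = cls ?F T x" if "x \<in> carrier ?F" for x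
    unfolding c_def by (rule surj_factor(2)[OF F Nl Cl q Q.qproj_lhom van that])
  have cs: "c ` carrier N = carrier ?C"
  proof
    show "c ` carrier N \<subseteq> carrier ?C" using lhom_closed[OF c] by blast
    show "carrier ?C \<subseteq> c ` carrier N"
    proof
      fix A assume "A \<in> carrier ?C"
      then obtain x where x: "x \<in> carrier ?F" "A = cls ?F T x" by auto
      hence "A = c (q x)" using cq by simp
      thus "A \<in> c ` carrier N" using x lhom_closed[OF q(1)] by blast
    qed
  qed
  have ck: "c y = \<zero>\<^bsub>?C\<^esub> \<longleftrightarrow> y \<in> S" if y: "y \<in> carrier N" for y
  proof -
    have "y \<in> q ` carrier ?F" using y q(2) by simp
    then obtain x where x: "x \<in> carrier ?F" "y = q x" by (rule imageE)
    have "c y = \<zero>\<^bsub>?C\<^esub> \<longleftrightarrow> x \<in> T" using cq[OF x(1)] x Q.qproj_kernel[OF x(1)] by simp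
    also have "\<dots> \<longleftrightarrow> y \<in> S" using x unfolding T_def by simp
    finally show ?thesis .
  qed
  show ?thesis by (rule that[OF Cp c cs ck])
qed

lemma zero_submod_fg:
  assumes N: "lmod R N"
  shows "lfingen R N {\<zero>\<^bsub>N\<^esub>}"
proof -
  interpret lmodule R N by (rule lmodule.intro) fact
  have s: "lsubmod R N {\<zero>\<^bsub>N\<^esub>}" unfolding lsubmod_def by auto
  have "hull R N {} = {\<zero>\<^bsub>N\<^esub>}"
  proof
    show "hull R N {} \<subseteq> {\<zero>\<^bsub>N\<^esub>}" by (rule hull_min[OF s]) simp
    show "{\<zero>\<^bsub>N\<^esub>} \<subseteq> hull R N {}" using lsubmod_zero[OF hull_lsubmod[OF N]] by blast
  qed
  thus ?thesis unfolding lfingen_hull[OF N] by (intro exI[of _ "{}"]) simp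
qed

lemma fpcopy:
  assumes N: "lfp R N"
  obtains C :: "'a fpmod" and c where "lfp R C" "c \<in> lhom R N C" "bij_betw c (carrier N) (carrier C)"
proof -
  have Nl: "lmod R N" using N by (simp add: lfp_def)
  interpret N: lmodule R N by (rule lmodule.intro) fact
  obtain C :: "'a fpmod" and c where C: "lfp R C" "c \<in> lhom R N C" "c ` carrier N = carrier C"
    "\<And>y. y \<in> carrier N \<Longrightarrow> c y = \<zero>\<^bsub>C\<^esub> \<longleftrightarrow> y \<in> {\<zero>\<^bsub>N\<^esub>}"
    using coker[OF N zero_submod_fg[OF Nl]] by blast
  have Cl: "lmod R C" using C(1) by (simp add: lfp_def)
  interpret C: lmodule R C by (rule lmodule.intro) fact
  have "inj_on c (carrier N)"
  proof (rule inj_onI)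
    fix x y assume xy: "x \<in> carrier N" "y \<in> carrier N" "c x = c y"
    hence "c (x \<ominus>\<^bsub>N\<^esub> y) = \<zero>\<^bsub>C\<^esub>" using lhom_minus[OF Nl Cl C(2)] lhom_closed[OF C(2)]
      by (simp add: C.M.minus_zero_iff)
    hence "x \<ominus>\<^bsub>N\<^esub> y = \<zero>\<^bsub>N\<^esub>" using C(4) xy by simp
    thus "x = y" using xy N.M.minus_zero_iff by blast
  qed
  thus ?thesis using that C by (auto simp: bij_betw_def)
qed


section \<open>Transport of structure along an injection\<close>

definition tmod :: "('a,'e) module \<Rightarrow> ('e \<Rightarrow> 'z) \<Rightarrow> ('a,'z) module" where
  "tmod E j = \<lparr>carrier = j ` carrier E, mult = (\<lambda>a b. undefined), one = undefined,
     zero = j \<zero>\<^bsub>E\<^esub>,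
     add = (\<lambda>a b. j (inv_into (carrier E) j a \<oplus>\<^bsub>E\<^esub> inv_into (carrier E) j b)),
     smult = (\<lambda>r a. j (r \<odot>\<^bsub>E\<^esub> inv_into (carrier E) j a))\<rparr>"

lemma tmod_simps:
  "carrier (tmod E j) = j ` carrier E" "\<zero>\<^bsub>tmod E j\<^esub> = j \<zero>\<^bsub>E\<^esub>"
  "a \<oplus>\<^bsub>tmod E j\<^esub> b = j (inv_into (carrier E) j a \<oplus>\<^bsub>E\<^esub> inv_into (carrier E) j b)"
  "r \<odot>\<^bsub>tmod E j\<^esub> a = j (r \<odot>\<^bsub>E\<^esub> inv_into (carrier E) j a)"
  by (simp_all add: tmod_def)

lemma transport:
  assumes E: "lmod R E" and j: "inj_on j (carrier E)"
  shows "lmod R (tmod E j)" "j \<in> lhom R E (tmod E j)" "bij_betw j (carrier E) (carrier (tmod E j))"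
    "inv_into (carrier E) j \<in> lhom R (tmod E j) E"
proof -
  interpret lmodule R E by (rule lmodule.intro) fact
  let ?k = "inv_into (carrier E) j"
  have kj[simp]: "?k (j x) = x" if "x \<in> carrier E" for x using j that by simp
  have kc: "?k a \<in> carrier E" if "a \<in> j ` carrier E" for a using that by (auto simp: inv_into_into)
  have jk: "j (?k a) = a" if "a \<in> j ` carrier E" for a using that by (simp add: f_inv_into_f)
  note simps = tmod_simps
  have ag: "abelian_group (tmod E j)"
  proof (rule abelian_groupI)
    fix a b assume "a \<in> carrier (tmod E j)" "b \<in> carrier (tmod E j)"
    then obtain x y where xy: "x \<in> carrier E" "y \<in> carrier E" "a = j x" "b = j y" by (auto simp: simps)
    thus "a \<oplus>\<^bsub>tmod E j\<^esub> b \<in> carrier (tmod E j)" by (simp add: simps)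
    show "a \<oplus>\<^bsub>tmod E j\<^esub> b = b \<oplus>\<^bsub>tmod E j\<^esub> a" using xy by (simp add: simps M.a_comm)
  next
    show "\<zero>\<^bsub>tmod E j\<^esub> \<in> carrier (tmod E j)" by (simp add: simps)
  next
    fix a b c assume "a \<in> carrier (tmod E j)" "b \<in> carrier (tmod E j)" "c \<in> carrier (tmod E j)"
    then obtain x y z where "x \<in> carrier E" "y \<in> carrier E" "z \<in> carrier E" "a = j x" "b = j y" "c = j z"
      by (auto simp: simps)
    thus "a \<oplus>\<^bsub>tmod E j\<^esub> b \<oplus>\<^bsub>tmod E j\<^esub> c = a \<oplus>\<^bsub>tmod E j\<^esub> (b \<oplus>\<^bsub>tmod E j\<^esub> c)"
      by (simp add: simps M.a_assoc)
  next
    fix a assume "a \<in> carrier (tmod E j)"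
    then obtain x where x: "x \<in> carrier E" "a = j x" by (auto simp: simps)
    thus "\<zero>\<^bsub>tmod E j\<^esub> \<oplus>\<^bsub>tmod E j\<^esub> a = a" by (simp add: simps)
    show "\<exists>b\<in>carrier (tmod E j). b \<oplus>\<^bsub>tmod E j\<^esub> a = \<zero>\<^bsub>tmod E j\<^esub>"
      using x by (intro bexI[of _ "j (\<ominus>\<^bsub>E\<^esub> x)"]) (auto simp: simps M.l_neg)
  qed
  show "lmod R (tmod E j)" unfolding lmod_def
  proof (intro conjI ballI)
    show "ring R" ..
    show "abelian_group (tmod E j)" by (rule ag)
    fix a A assume "a \<in> carrier R" "A \<in> carrier (tmod E j)"
    then obtain x where x: "x \<in> carrier E" "A = j x" by (auto simp: simps)
    show "a \<odot>\<^bsub>tmod E j\<^esub> A \<in> carrier (tmod E j)" using x \<open>a \<in> _\<close> by (simp add: simps)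
  next
    fix a A B assume "a \<in> carrier R" "A \<in> carrier (tmod E j)" "B \<in> carrier (tmod E j)"
    then obtain x y where "x \<in> carrier E" "y \<in> carrier E" "A = j x" "B = j y" by (auto simp: simps)
    thus "a \<odot>\<^bsub>tmod E j\<^esub> (A \<oplus>\<^bsub>tmod E j\<^esub> B) = a \<odot>\<^bsub>tmod E j\<^esub> A \<oplus>\<^bsub>tmod E j\<^esub> a \<odot>\<^bsub>tmod E j\<^esub> B"
      using \<open>a \<in> _\<close> by (simp add: simps smult_add)
  next
    fix a b A assume "a \<in> carrier R" "b \<in> carrier R" "A \<in> carrier (tmod E j)"
    then obtain x where "x \<in> carrier E" "A = j x" by (auto simp: simps)
    thus "(a \<oplus>\<^bsub>R\<^esub> b) \<odot>\<^bsub>tmod E j\<^esub> A = a \<odot>\<^bsub>tmod E j\<^esub> A \<oplus>\<^bsub>tmod E j\<^esub> b \<odot>\<^bsub>tmod E j\<^esub> A"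
      using \<open>a \<in> _\<close> \<open>b \<in> _\<close> by (simp add: simps add_smult)
    show "(a \<otimes>\<^bsub>R\<^esub> b) \<odot>\<^bsub>tmod E j\<^esub> A = a \<odot>\<^bsub>tmod E j\<^esub> (b \<odot>\<^bsub>tmod E j\<^esub> A)"
      using \<open>a \<in> _\<close> \<open>b \<in> _\<close> \<open>x \<in> _\<close> \<open>A = _\<close> by (simp add: simps mult_smult)
  next
    fix A assume "A \<in> carrier (tmod E j)"
    then obtain x where "x \<in> carrier E" "A = j x" by (auto simp: simps)
    thus "\<one>\<^bsub>R\<^esub> \<odot>\<^bsub>tmod E j\<^esub> A = A" by (simp add: simps)
  qed
  show "j \<in> lhom R E (tmod E j)" by (rule lhomI) (auto simp: simps)
  show "bij_betw j (carrier E) (carrier (tmod E j))" using j by (simp add: simps bij_betw_def)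
  show "?k \<in> lhom R (tmod E j) E"
  proof (rule lhomI)
    fix a assume "a \<in> carrier (tmod E j)" thus "?k a \<in> carrier E" using kc by (simp add: simps)
  next
    fix a b assume "a \<in> carrier (tmod E j)" "b \<in> carrier (tmod E j)"
    thus "?k (a \<oplus>\<^bsub>tmod E j\<^esub> b) = ?k a \<oplus>\<^bsub>E\<^esub> ?k b" using kc by (simp add: simps)
  next
    fix r a assume "r \<in> carrier R" "a \<in> carrier (tmod E j)"
    thus "?k (r \<odot>\<^bsub>tmod E j\<^esub> a) = r \<odot>\<^bsub>E\<^esub> ?k a" using kc by (simp add: simps)
  qed
qed

section \<open>Ext splitting for extensions with arbitrary carrier type\<close>

lemma ext1_any:
  fixes N :: "('a,'n) module" and M :: "('a,'m) module" and E :: "('a,'e) module"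
  assumes ext: "ext1_zero R N M" and M: "lmod R M" and N: "lmod R N" and E: "lmod R E"
    and i: "i \<in> lhom R M E" and p: "p \<in> lhom R E N" and ii: "inj_on i (carrier M)"
    and ps: "p ` carrier E = carrier N" and ker: "i ` carrier M = {e \<in> carrier E. p e = \<zero>\<^bsub>N\<^esub>}"
  shows "\<exists>r \<in> lhom R E M. \<forall>x\<in>carrier M. r (i x) = x"
proof -
  interpret M: lmodule R M by (rule lmodule.intro) fact
  interpret N: lmodule R N by (rule lmodule.intro) fact
  interpret E: lmodule R E by (rule lmodule.intro) fact
  define s where "s z = (SOME e. e \<in> carrier E \<and> p e = z)" for z
  have s: "s z \<in> carrier E \<and> p (s z) = z" if "z \<in> carrier N" for z
  proof -
    have "z \<in> p ` carrier E" using that ps by simp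
    then obtain x where x: "x \<in> carrier E" "z = p x" by (rule imageE)
    show ?thesis unfolding s_def by (rule someI[of "\<lambda>y. y \<in> carrier E \<and> p y = z" x]) (use x in simp)
  qed
  define ii' where "ii' = inv_into (carrier M) i"
  define j where "j e = (ii' (e \<ominus>\<^bsub>E\<^esub> s (p e)), p e)" for e
  have dk: "e \<ominus>\<^bsub>E\<^esub> s (p e) \<in> i ` carrier M" if "e \<in> carrier E" for e
  proof -
    have pe: "p e \<in> carrier N" using lhom_closed[OF p that] .
    have "p (e \<ominus>\<^bsub>E\<^esub> s (p e)) = \<zero>\<^bsub>N\<^esub>" using lhom_minus[OF E N p that] s[OF pe] that
      by (simp add: N.M.minus_zero_iff pe)
    thus ?thesis using ker that s[OF pe] by simp
  qed
  have jinj: "inj_on j (carrier E)"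
  proof (rule inj_onI)
    fix e e' assume ee: "e \<in> carrier E" "e' \<in> carrier E" "j e = j e'"
    hence pe: "p e = p e'" and ie: "ii' (e \<ominus>\<^bsub>E\<^esub> s (p e)) = ii' (e' \<ominus>\<^bsub>E\<^esub> s (p e'))" by (auto simp: j_def)
    have "e \<ominus>\<^bsub>E\<^esub> s (p e) = e' \<ominus>\<^bsub>E\<^esub> s (p e')"
      using ie dk[OF ee(1)] dk[OF ee(2)] unfolding ii'_def by (metis f_inv_into_f)
    hence "e \<ominus>\<^bsub>E\<^esub> s (p e) \<oplus>\<^bsub>E\<^esub> s (p e) = e' \<ominus>\<^bsub>E\<^esub> s (p e) \<oplus>\<^bsub>E\<^esub> s (p e)" using pe by simp
    thus "e = e'" using ee s lhom_closed[OF p] by (simp add: E.M.sub_add_cancel)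
  qed
  let ?E' = "tmod E j"
  let ?k = "inv_into (carrier E) j"
  note T = transport[OF E jinj]
  interpret E': lmodule R ?E' by (rule lmodule.intro) (rule T(1))
  have kj: "?k (j e) = e" if "e \<in> carrier E" for e using jinj that by simp
  have i': "(\<lambda>x. j (i x)) \<in> lhom R M ?E'" by (rule lhom_comp[OF i T(2)])
  have p': "(\<lambda>e. p (?k e)) \<in> lhom R ?E' N" by (rule lhom_comp[OF T(4) p])
  have ii2: "inj_on (\<lambda>x. j (i x)) (carrier M)"
    using ii jinj lhom_closed[OF i] by (auto simp: inj_on_def)
  have kc: "?k e \<in> carrier E" if "e \<in> carrier ?E'" for e using that by (auto simp: tmod_simps inv_into_into)
  have jk: "j (?k e) = e" if "e \<in> carrier ?E'" for e using that by (auto simp: tmod_simps f_inv_into_f)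
  have ps2: "(\<lambda>e. p (?k e)) ` carrier ?E' = carrier N"
  proof -
    have "(\<lambda>e. p (?k e)) ` carrier ?E' = p ` (?k ` j ` carrier E)" by (simp add: tmod_simps image_image)
    also have "?k ` j ` carrier E = carrier E" using jinj by (simp add: image_image)
    finally show ?thesis using ps by simp
  qed
  have ker2: "(\<lambda>x. j (i x)) ` carrier M = {e \<in> carrier ?E'. p (?k e) = \<zero>\<^bsub>N\<^esub>}"
  proof
    show "(\<lambda>x. j (i x)) ` carrier M \<subseteq> {e \<in> carrier ?E'. p (?k e) = \<zero>\<^bsub>N\<^esub>}"
    proof
      fix e assume "e \<in> (\<lambda>x. j (i x)) ` carrier M"
      then obtain x where x: "x \<in> carrier M" "e = j (i x)" by auto
      have ic: "i x \<in> carrier E" using lhom_closed[OF i x(1)] .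
      have "p (i x) = \<zero>\<^bsub>N\<^esub>" using ker x(1) by blast
      thus "e \<in> {e \<in> carrier ?E'. p (?k e) = \<zero>\<^bsub>N\<^esub>}" using x ic kj by (simp add: tmod_simps)
    qed
    show "{e \<in> carrier ?E'. p (?k e) = \<zero>\<^bsub>N\<^esub>} \<subseteq> (\<lambda>x. j (i x)) ` carrier M"
    proof
      fix e assume e: "e \<in> {e \<in> carrier ?E'. p (?k e) = \<zero>\<^bsub>N\<^esub>}"
      hence "?k e \<in> i ` carrier M" using ker kc by blast
      then obtain x where x: "x \<in> carrier M" "?k e = i x" by auto
      have "e = j (i x)" using jk[of e] e x(2) by simp
      thus "e \<in> (\<lambda>x. j (i x)) ` carrier M" using x(1) by (rule image_eqI)
    qed
  qed
  from ext[unfolded ext1_zero_def, rule_format, OF conjI[OF T(1) conjI[OF i' conjI[OF p' conjI[OF ii2 conjI[OF ps2 ker2]]]]]]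
  obtain r where r: "r \<in> lhom R ?E' M" "\<forall>x\<in>carrier M. r (j (i x)) = x" by blast
  show ?thesis by (rule bexI[of _ "\<lambda>x. r (j x)"]) (use lhom_comp[OF T(2) r(1)] r(2) in auto)
qed


lemma lfp_fg:
  assumes N: "lfp R N"
  obtains X where "finite X" "X \<subseteq> carrier N" "carrier N = hull R N X"
proof -
  have Nl: "lmod R N" using N by (simp add: lfp_def)
  have R: "ring R" using lmod_ring[OF Nl] .
  obtain n q G where q: "q \<in> lhom R (freemod R n) N" "q ` carrier (freemod R n) = carrier N"
    by (rule lfpE[OF N])
  let ?B = "ebas R ` {..<n}"
  have Bc: "?B \<subseteq> carrier (freemod R n)" using ebas_carrier[OF R] by auto
  have "carrier N = q ` carrier (freemod R n)" using q(2) by (rule sym)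
  also have "\<dots> = q ` hull R (freemod R n) ?B" by (subst freemod_hull[OF R, of n]) (rule refl)
  also have "\<dots> = hull R N (q ` ?B)" by (rule hull_image[OF freemod_lmod[OF R] Nl q(1) Bc])
  finally have e: "carrier N = hull R N (q ` ?B)" .
  have s: "q ` ?B \<subseteq> carrier N" using Bc lhom_closed[OF q(1)] by auto
  show ?thesis by (rule that[of "q ` ?B", OF _ s e]) simp
qed

lemma image_fg:
  assumes N: "lfp R N" and N': "lmod R N'" and a: "a \<in> lhom R N N'"
  shows "lfingen R N' (a ` carrier N)"
proof -
  have Nl: "lmod R N" using N by (simp add: lfp_def)
  obtain X where X: "finite X" "X \<subseteq> carrier N" "carrier N = hull R N X" by (rule lfp_fg[OF N])
  have "a ` carrier N = hull R N' (a ` X)" using X(3) hull_image[OF Nl N' a X(2)] by simp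
  moreover have "a ` X \<subseteq> carrier N'" using X(2) lhom_closed[OF a] by auto
  ultimately show ?thesis unfolding lfingen_hull[OF N'] using X(1) by (intro exI[of _ "a ` X"]) simp
qed

definition prodmod :: "('a,'m) module \<Rightarrow> ('a,'n) module \<Rightarrow> ('a, 'm \<times> 'n) module" where
  "prodmod M N = \<lparr>carrier = carrier M \<times> carrier N, mult = (\<lambda>a b. undefined), one = undefined,
     zero = (\<zero>\<^bsub>M\<^esub>, \<zero>\<^bsub>N\<^esub>),
     add = (\<lambda>a b. (fst a \<oplus>\<^bsub>M\<^esub> fst b, snd a \<oplus>\<^bsub>N\<^esub> snd b)),
     smult = (\<lambda>r a. (r \<odot>\<^bsub>M\<^esub> fst a, r \<odot>\<^bsub>N\<^esub> snd a))\<rparr>"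

lemma prodmod_simps[simp]:
  "carrier (prodmod M N) = carrier M \<times> carrier N" "\<zero>\<^bsub>prodmod M N\<^esub> = (\<zero>\<^bsub>M\<^esub>, \<zero>\<^bsub>N\<^esub>)"
  "(a, b) \<oplus>\<^bsub>prodmod M N\<^esub> (c, d) = (a \<oplus>\<^bsub>M\<^esub> c, b \<oplus>\<^bsub>N\<^esub> d)"
  "r \<odot>\<^bsub>prodmod M N\<^esub> (a, b) = (r \<odot>\<^bsub>M\<^esub> a, r \<odot>\<^bsub>N\<^esub> b)"
  by (simp_all add: prodmod_def)

lemma prodmod_lmod:
  assumes M: "lmod R M" and N: "lmod R N"
  shows "lmod R (prodmod M N)"
proof -
  interpret M: lmodule R M by (rule lmodule.intro) fact
  interpret N: lmodule R N by (rule lmodule.intro) fact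
  have ag: "abelian_group (prodmod M N)"
  proof (rule abelian_groupI)
    fix x assume "x \<in> carrier (prodmod M N)"
    then obtain a b where x: "x = (a, b)" "a \<in> carrier M" "b \<in> carrier N" by auto
    show "\<exists>y\<in>carrier (prodmod M N). y \<oplus>\<^bsub>prodmod M N\<^esub> x = \<zero>\<^bsub>prodmod M N\<^esub>"
      using x by (intro bexI[of _ "(\<ominus>\<^bsub>M\<^esub> a, \<ominus>\<^bsub>N\<^esub> b)"]) (auto simp: M.M.l_neg N.M.l_neg)
  qed (auto simp: M.M.a_ac N.M.a_ac)
  show ?thesis unfolding lmod_def
    using ag M.R.ring_axioms by (auto simp: M.smult_add N.smult_add M.add_smult N.add_smult M.mult_smult N.mult_smult)
qed

lemma prodmod_minus:
  assumes M: "lmod R M" and N: "lmod R N" and "a \<in> carrier M" "b \<in> carrier N" "c \<in> carrier M" "d \<in> carrier N"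
  shows "(a, b) \<ominus>\<^bsub>prodmod M N\<^esub> (c, d) = (a \<ominus>\<^bsub>M\<^esub> c, b \<ominus>\<^bsub>N\<^esub> d)"
proof -
  interpret M: lmodule R M by (rule lmodule.intro) fact
  interpret N: lmodule R N by (rule lmodule.intro) fact
  interpret P: lmodule R "prodmod M N" by (rule lmodule.intro) (rule prodmod_lmod[OF M N])
  have "\<ominus>\<^bsub>prodmod M N\<^esub> (c, d) = (\<ominus>\<^bsub>M\<^esub> c, \<ominus>\<^bsub>N\<^esub> d)"
    by (rule P.M.minus_equality) (use assms in \<open>auto simp: M.M.l_neg N.M.l_neg\<close>)
  thus ?thesis using assms by (simp add: P.M.minus_eq M.M.minus_eq N.M.minus_eq)
qed


lemma fpinj_sub:
  fixes R :: "'a ring" and M :: "('a,'m) module"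
  assumes M: "lmod R M" and fpi: "fp_injective R M"
  shows "kerDefect_sub_kerEv R M"
  unfolding kerDefect_sub_kerEv_def
proof (intro allI impI)
  fix N N' :: "'a fpmod" and \<alpha>
  assume "lfp R N \<and> lfp R N' \<and> \<alpha> \<in> lhom R N N' \<and> defect_zero N N' \<alpha>"
  hence N: "lfp R N" and N': "lfp R N'" and a: "\<alpha> \<in> lhom R N N'" and dz: "defect_zero N N' \<alpha>" by auto
  have Nl: "lmod R N" and N'l: "lmod R N'" using N N' by (auto simp: lfp_def)
  interpret M: lmodule R M by (rule lmodule.intro) fact
  interpret N: lmodule R N by (rule lmodule.intro) fact
  interpret N': lmodule R N' by (rule lmodule.intro) fact
  show "ev_zero R N N' \<alpha> M" unfolding ev_zero_def
  proof
    fix h assume h: "h \<in> lhom R N M"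
    let ?S = "\<alpha> ` carrier N"
    obtain C :: "'a fpmod" and c where C: "lfp R C" "c \<in> lhom R N' C" "c ` carrier N' = carrier C"
      "\<And>y. y \<in> carrier N' \<Longrightarrow> c y = \<zero>\<^bsub>C\<^esub> \<longleftrightarrow> y \<in> ?S"
      by (rule coker[OF N' image_fg[OF N N'l a]]) blast
    have Cl: "lmod R C" using C(1) by (simp add: lfp_def)
    interpret C: lmodule R C by (rule lmodule.intro) fact
    let ?P = "prodmod M N'"
    have Pl: "lmod R ?P" by (rule prodmod_lmod[OF M N'l])
    interpret P: lmodule R ?P by (rule lmodule.intro) fact
    define d where "d x = (h x, \<ominus>\<^bsub>N'\<^esub> \<alpha> x)" for x
    have na: "(\<lambda>x. \<ominus>\<^bsub>N'\<^esub> \<alpha> x) \<in> lhom R N N'"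
    proof (rule lhomI)
      fix x y assume "x \<in> carrier N" "y \<in> carrier N"
      thus "\<ominus>\<^bsub>N'\<^esub> \<alpha> (x \<oplus>\<^bsub>N\<^esub> y) = \<ominus>\<^bsub>N'\<^esub> \<alpha> x \<oplus>\<^bsub>N'\<^esub> \<ominus>\<^bsub>N'\<^esub> \<alpha> y"
        using lhom_closed[OF a] lhom_add[OF a] by (simp add: N'.M.minus_add N'.M.a_comm)
    next
      fix r x assume "r \<in> carrier R" "x \<in> carrier N"
      thus "\<ominus>\<^bsub>N'\<^esub> \<alpha> (r \<odot>\<^bsub>N\<^esub> x) = r \<odot>\<^bsub>N'\<^esub> \<ominus>\<^bsub>N'\<^esub> \<alpha> x"
        using lhom_closed[OF a] lhom_smult[OF a] by (simp add: N'.smult_neg)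
    qed (use lhom_closed[OF a] in auto)
    have dh: "d \<in> lhom R N ?P"
      unfolding d_def by (rule lhomI)
        (auto simp: lhom_closed[OF h] lhom_closed[OF na] lhom_add[OF h] lhom_add[OF na]
          lhom_smult[OF h] lhom_smult[OF na])
    let ?D = "d ` carrier N"
    have Ds: "lsubmod R ?P ?D" by (rule lsubmod_image[OF Nl Pl dh lsubmod_carrier[OF Nl]])
    interpret Q: qctx R ?P ?D by (rule qctx.intro[OF lmodule.intro[OF Pl]]) (rule qctx_axioms.intro[OF Ds])
    let ?E = "qmod ?P ?D"
    have El: "lmod R ?E" by (rule Q.qmod_lmod)
    define i0 where "i0 m = cls ?P ?D (m, \<zero>\<^bsub>N'\<^esub>)" for m
    have inc1: "(\<lambda>m. (m, \<zero>\<^bsub>N'\<^esub>)) \<in> lhom R M ?P" by (rule lhomI) auto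
    have inc2: "(\<lambda>y. (\<zero>\<^bsub>M\<^esub>, y)) \<in> lhom R N' ?P" by (rule lhomI) auto
    have i0: "i0 \<in> lhom R M ?E" unfolding i0_def by (rule lhom_comp[OF inc1 Q.qproj_lhom])
    define g where "g z = c (snd z)" for z :: "'m \<times> (nat \<Rightarrow> 'a) set"
    have gh: "g \<in> lhom R ?P C" unfolding g_def
      by (rule lhomI) (auto simp: lhom_closed[OF C(2)] lhom_add[OF C(2)] lhom_smult[OF C(2)])
    have cS: "c y = \<zero>\<^bsub>C\<^esub>" if "y \<in> ?S" for y using C(4) that lhom_closed[OF a] by auto
    have gvan: "g z = \<zero>\<^bsub>C\<^esub>" if "z \<in> ?D" for z
    proof -
      from that obtain x where x: "x \<in> carrier N" "z = d x" by auto
      have ax: "\<alpha> x \<in> carrier N'" using lhom_closed[OF a x(1)] .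
      have "g z = c (\<ominus>\<^bsub>N'\<^esub> \<alpha> x)" using x by (simp add: g_def d_def)
      also have "\<dots> = \<ominus>\<^bsub>C\<^esub> c (\<alpha> x)" by (rule lhom_neg[OF N'l Cl C(2) ax])
      also have "\<dots> = \<zero>\<^bsub>C\<^esub>" using cS x(1) by simp
      finally show ?thesis .
    qed
    define p0 where "p0 A = g (qrep A)" for A
    have p0: "p0 \<in> lhom R ?E C" unfolding p0_def by (rule Q.qfactor(1)[OF Cl gh gvan])
    have p0c: "p0 (cls ?P ?D z) = g z" if "z \<in> carrier ?P" for z
      unfolding p0_def by (rule Q.qfactor(2)[OF Cl gh gvan that])
    have dmem: "(\<ominus>\<^bsub>M\<^esub> h x, \<alpha> x) \<in> ?D" if x: "x \<in> carrier N" for x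
    proof -
      have "d (\<ominus>\<^bsub>N\<^esub> x) = (\<ominus>\<^bsub>M\<^esub> h x, \<alpha> x)"
        using x lhom_neg[OF Nl M h x] lhom_neg[OF Nl N'l a x] lhom_closed[OF a x]
        by (simp add: d_def N'.M.minus_minus)
      thus ?thesis using x by (metis N.M.a_inv_closed image_eqI)
    qed
    have ii: "inj_on i0 (carrier M)"
    proof (rule inj_onI)
      fix m m' assume mm: "m \<in> carrier M" "m' \<in> carrier M" "i0 m = i0 m'"
      hence "(m, \<zero>\<^bsub>N'\<^esub>) \<ominus>\<^bsub>?P\<^esub> (m', \<zero>\<^bsub>N'\<^esub>) \<in> ?D" using Q.cls_eq unfolding i0_def by simp
      hence "(m \<ominus>\<^bsub>M\<^esub> m', \<zero>\<^bsub>N'\<^esub>) \<in> ?D" using prodmod_minus[OF M N'l] mm by simp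
      then obtain x where x: "x \<in> carrier N" "(m \<ominus>\<^bsub>M\<^esub> m', \<zero>\<^bsub>N'\<^esub>) = d x" by blast
      hence "\<ominus>\<^bsub>N'\<^esub> \<alpha> x = \<zero>\<^bsub>N'\<^esub>" by (simp add: d_def)
      hence "\<alpha> x = \<zero>\<^bsub>N'\<^esub>" using lhom_closed[OF a x(1)] N'.M.minus_minus by (metis N'.M.neg_zero)
      hence "x = \<zero>\<^bsub>N\<^esub>" using dz x(1) by (simp add: defect_zero_def)
      hence "m \<ominus>\<^bsub>M\<^esub> m' = \<zero>\<^bsub>M\<^esub>" using x lhom_zero[OF Nl M h] by (simp add: d_def)
      thus "m = m'" using mm M.M.minus_zero_iff by blast
    qed
    have ps: "p0 ` carrier ?E = carrier C"
    proof
      show "p0 ` carrier ?E \<subseteq> carrier C" using lhom_closed[OF p0] by blast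
      show "carrier C \<subseteq> p0 ` carrier ?E"
      proof
        fix z assume "z \<in> carrier C"
        then obtain y where y: "y \<in> carrier N'" "z = c y" using C(3) by blast
        have "p0 (cls ?P ?D (\<zero>\<^bsub>M\<^esub>, y)) = z" using p0c y by (simp add: g_def)
        moreover have "cls ?P ?D (\<zero>\<^bsub>M\<^esub>, y) \<in> carrier ?E" using y by simp
        ultimately show "z \<in> p0 ` carrier ?E" by (metis image_eqI)
      qed
    qed
    have ker: "i0 ` carrier M = {e \<in> carrier ?E. p0 e = \<zero>\<^bsub>C\<^esub>}"
    proof
      show "i0 ` carrier M \<subseteq> {e \<in> carrier ?E. p0 e = \<zero>\<^bsub>C\<^esub>}"
      proof
        fix e assume "e \<in> i0 ` carrier M"
        then obtain m where m: "m \<in> carrier M" "e = i0 m" by auto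
        have "p0 e = c \<zero>\<^bsub>N'\<^esub>" using m p0c by (simp add: i0_def g_def)
        also have "\<dots> = \<zero>\<^bsub>C\<^esub>" by (rule lhom_zero[OF N'l Cl C(2)])
        finally show "e \<in> {e \<in> carrier ?E. p0 e = \<zero>\<^bsub>C\<^esub>}" using m lhom_closed[OF i0] by simp
      qed
      show "{e \<in> carrier ?E. p0 e = \<zero>\<^bsub>C\<^esub>} \<subseteq> i0 ` carrier M"
      proof
        fix e assume e: "e \<in> {e \<in> carrier ?E. p0 e = \<zero>\<^bsub>C\<^esub>}"
        then obtain m y where my: "m \<in> carrier M" "y \<in> carrier N'" "e = cls ?P ?D (m, y)" by auto
        have "c y = \<zero>\<^bsub>C\<^esub>" using e my p0c by (simp add: g_def)
        hence "y \<in> ?S" using C(4) my(2) by simp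
        then obtain x where x: "x \<in> carrier N" "y = \<alpha> x" by auto
        have hx: "h x \<in> carrier M" using lhom_closed[OF h x(1)] .
        have "(m, y) \<ominus>\<^bsub>?P\<^esub> (m \<oplus>\<^bsub>M\<^esub> h x, \<zero>\<^bsub>N'\<^esub>) = (\<ominus>\<^bsub>M\<^esub> h x, \<alpha> x)"
        proof -
          have "m \<ominus>\<^bsub>M\<^esub> (m \<oplus>\<^bsub>M\<^esub> h x) = \<ominus>\<^bsub>M\<^esub> h x" using my hx
            by (simp add: M.M.minus_eq M.M.minus_add M.M.r_neg2)
          thus ?thesis using prodmod_minus[OF M N'l, of m y "m \<oplus>\<^bsub>M\<^esub> h x" "\<zero>\<^bsub>N'\<^esub>"] my hx x lhom_closed[OF a x(1)]
            by simp
        qed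
        hence "(m, y) \<ominus>\<^bsub>?P\<^esub> (m \<oplus>\<^bsub>M\<^esub> h x, \<zero>\<^bsub>N'\<^esub>) \<in> ?D" using dmem[OF x(1)] by simp
        hence "e = i0 (m \<oplus>\<^bsub>M\<^esub> h x)" using Q.cls_eq my hx unfolding i0_def by simp
        thus "e \<in> i0 ` carrier M" using my hx by simp
      qed
    qed
    have ext: "ext1_zero R C M" using fpi C(1) by (simp add: fp_injective_def)
    obtain r where r: "r \<in> lhom R ?E M" "\<forall>x\<in>carrier M. r (i0 x) = x"
      using ext1_any[OF ext M Cl El i0 p0 ii ps ker] by blast
    define \<beta> where "\<beta> y = r (cls ?P ?D (\<zero>\<^bsub>M\<^esub>, y))" for y
    have \<beta>: "\<beta> \<in> lhom R N' M" unfolding \<beta>_def by (rule lhom_comp[OF lhom_comp[OF inc2 Q.qproj_lhom] r(1)])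
    have "\<forall>x\<in>carrier N. \<beta> (\<alpha> x) = h x"
    proof
      fix x assume x: "x \<in> carrier N"
      have hx: "h x \<in> carrier M" using lhom_closed[OF h x] .
      have ax: "\<alpha> x \<in> carrier N'" using lhom_closed[OF a x] .
      have "(\<zero>\<^bsub>M\<^esub>, \<alpha> x) \<ominus>\<^bsub>?P\<^esub> (h x, \<zero>\<^bsub>N'\<^esub>) = (\<ominus>\<^bsub>M\<^esub> h x, \<alpha> x)"
        using prodmod_minus[OF M N'l] hx ax by (simp add: M.M.minus_eq)
      hence "cls ?P ?D (\<zero>\<^bsub>M\<^esub>, \<alpha> x) = i0 (h x)" using Q.cls_eq dmem[OF x] hx ax unfolding i0_def by simp
      thus "\<beta> (\<alpha> x) = h x" using r(2) hx unfolding \<beta>_def by simp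
    qed
    thus "\<exists>\<beta>\<in>lhom R N' M. \<forall>x\<in>carrier N. \<beta> (\<alpha> x) = h x" using \<beta> by blast
  qed
qed


lemma sub_any:
  fixes N :: "('a,'n) module" and N' :: "('a,'k) module" and M :: "('a,'m) module"
  assumes sub: "kerDefect_sub_kerEv R M" and M: "lmod R M"
    and N: "lfp R N" and N': "lfp R N'" and a: "\<alpha> \<in> lhom R N N'"
    and dz: "\<And>x. x \<in> carrier N \<Longrightarrow> \<alpha> x = \<zero>\<^bsub>N'\<^esub> \<Longrightarrow> x = \<zero>\<^bsub>N\<^esub>"
    and h: "h \<in> lhom R N M"
  shows "\<exists>\<beta> \<in> lhom R N' M. \<forall>x\<in>carrier N. \<beta> (\<alpha> x) = h x"
proof -
  have Nl: "lmod R N" and N'l: "lmod R N'" using N N' by (auto simp: lfp_def)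
  obtain C :: "'a fpmod" and t where C: "lfp R C" "t \<in> lhom R N C" "bij_betw t (carrier N) (carrier C)"
    by (rule fpcopy[OF N])
  obtain C' :: "'a fpmod" and t' where C': "lfp R C'" "t' \<in> lhom R N' C'" "bij_betw t' (carrier N') (carrier C')"
    by (rule fpcopy[OF N'])
  have Cl: "lmod R C" and C'l: "lmod R C'" using C(1) C'(1) by (auto simp: lfp_def)
  interpret N: lmodule R N by (rule lmodule.intro) fact
  interpret N': lmodule R N' by (rule lmodule.intro) fact
  interpret C: lmodule R C by (rule lmodule.intro) fact
  interpret C': lmodule R C' by (rule lmodule.intro) fact
  define ti where "ti = inv_into (carrier N) t"
  have ti: "ti \<in> lhom R C N" unfolding ti_def by (rule lhom_inv[OF C(2) C(3) Nl])
  have tit: "ti (t x) = x" if "x \<in> carrier N" for x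
    using C(3) that unfolding ti_def bij_betw_def by simp
  have tti: "t (ti y) = y" if "y \<in> carrier C" for y
    using C(3) that unfolding ti_def bij_betw_def by (simp add: f_inv_into_f)
  define a0 where "a0 y = t' (\<alpha> (ti y))" for y
  have a0: "a0 \<in> lhom R C C'" unfolding a0_def by (rule lhom_comp[OF lhom_comp[OF ti a] C'(2)])
  have h0: "(\<lambda>y. h (ti y)) \<in> lhom R C M" by (rule lhom_comp[OF ti h])
  have dz0: "defect_zero C C' a0" unfolding defect_zero_def
  proof (intro ballI impI)
    fix y assume y: "y \<in> carrier C" and "a0 y = \<zero>\<^bsub>C'\<^esub>"
    hence "t' (\<alpha> (ti y)) = t' \<zero>\<^bsub>N'\<^esub>" using lhom_zero[OF N'l C'l C'(2)] by (simp add: a0_def)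
    moreover have "\<alpha> (ti y) \<in> carrier N'" using lhom_closed[OF a lhom_closed[OF ti y]] .
    ultimately have "\<alpha> (ti y) = \<zero>\<^bsub>N'\<^esub>" using C'(3) unfolding bij_betw_def inj_on_def by blast
    hence "ti y = \<zero>\<^bsub>N\<^esub>" using dz lhom_closed[OF ti y] by blast
    hence "t (ti y) = \<zero>\<^bsub>C\<^esub>" using lhom_zero[OF Nl Cl C(2)] by simp
    thus "y = \<zero>\<^bsub>C\<^esub>" using tti y by simp
  qed
  from sub[unfolded kerDefect_sub_kerEv_def, rule_format, OF conjI[OF C(1) conjI[OF C'(1) conjI[OF a0 dz0]]]]
  have ev: "ev_zero R C C' a0 M" .
  have "\<exists>\<beta>\<in>lhom R C' M. \<forall>x\<in>carrier C. \<beta> (a0 x) = h (ti x)"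
    using bspec[OF ev[unfolded ev_zero_def] h0] by simp
  then obtain \<beta>0 where b0: "\<beta>0 \<in> lhom R C' M" "\<forall>y\<in>carrier C. \<beta>0 (a0 y) = h (ti y)" by blast
  have "\<forall>x\<in>carrier N. \<beta>0 (t' (\<alpha> x)) = h x"
  proof
    fix x assume x: "x \<in> carrier N"
    have "\<beta>0 (a0 (t x)) = h (ti (t x))" using b0(2) lhom_closed[OF C(2) x] by blast
    thus "\<beta>0 (t' (\<alpha> x)) = h x" using tit[OF x] by (simp add: a0_def)
  qed
  thus ?thesis using lhom_comp[OF C'(2) b0(1)] by (intro bexI[of _ "\<lambda>x. \<beta>0 (t' x)"]) auto
qed

lemma ring_lmod_fg:
  assumes R: "ring R"
  shows "lfingen R (ring_lmod R) (carrier R)"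
proof -
  interpret R: ring R by fact
  have RL: "lmod R (ring_lmod R)" by (rule ring_lmod_lmod[OF R])
  have e: "carrier R = hull R (ring_lmod R) {\<one>\<^bsub>R\<^esub>}"
  proof
    show "hull R (ring_lmod R) {\<one>\<^bsub>R\<^esub>} \<subseteq> carrier R" using hull_sub[of R "ring_lmod R"] by simp
    show "carrier R \<subseteq> hull R (ring_lmod R) {\<one>\<^bsub>R\<^esub>}"
    proof
      fix x assume x: "x \<in> carrier R"
      have "\<one>\<^bsub>R\<^esub> \<in> hull R (ring_lmod R) {\<one>\<^bsub>R\<^esub>}" using hull_incl[of "{\<one>\<^bsub>R\<^esub>}" "ring_lmod R" R] by simp
      hence "x \<odot>\<^bsub>ring_lmod R\<^esub> \<one>\<^bsub>R\<^esub> \<in> hull R (ring_lmod R) {\<one>\<^bsub>R\<^esub>}"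
        using lsubmod_smult[OF hull_lsubmod[OF RL] x] by blast
      thus "x \<in> hull R (ring_lmod R) {\<one>\<^bsub>R\<^esub>}" using x by simp
    qed
  qed
  show ?thesis unfolding lfingen_hull[OF RL]
  proof (intro exI[of _ "{\<one>\<^bsub>R\<^esub>}"] conjI)
    show "carrier R = hull R (ring_lmod R) {\<one>\<^bsub>R\<^esub>}" by (rule e)
  qed simp_all
qed

lemma ring_lmod_lfp:
  assumes lc: "left_coherent R"
  shows "lfp R (ring_lmod R)"
proof -
  have R: "ring R" using lc by (simp add: left_coherent_def)
  have "lfp R ((ring_lmod R)\<lparr>carrier := carrier R\<rparr>)"
    using lc ring_lmod_fg[OF R] by (simp add: left_coherent_def)
  moreover have "(ring_lmod R)\<lparr>carrier := carrier R\<rparr> = ring_lmod R" by (simp add: ring_lmod_def)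
  ultimately show ?thesis by simp
qed

lemma freemod_restrict: "freemod R n = (freemod R m)\<lparr>carrier := carrier (freemod R n)\<rparr>"
  by (simp add: freemod_def)

lemma freemod_mono: "n \<le> m \<Longrightarrow> carrier (freemod R n) \<subseteq> carrier (freemod R m)"
  by (auto simp: freemod_simps)


lemma kernel_fg:
  fixes A :: "('a,'m) module" and B :: "('a,'b) module"
  assumes A: "lmod R A" and B: "lmod R B" and pi: "\<pi> \<in> lhom R A B"
    and X: "finite X" "X \<subseteq> carrier A"
    and Ifp: "lfp R (B\<lparr>carrier := \<pi> ` hull R A X\<rparr>)"
  shows "lfingen R A {z \<in> hull R A X. \<pi> z = \<zero>\<^bsub>B\<^esub>}"
proof -
  interpret A: lmodule R A by (rule lmodule.intro) fact
  interpret B: lmodule R B by (rule lmodule.intro) fact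
  have R: "ring R" by (rule A.R.ring_axioms)
  let ?K = "hull R A X"
  let ?I = "\<pi> ` ?K"
  let ?B' = "B\<lparr>carrier := ?I\<rparr>"
  have Ks: "lsubmod R A ?K" by (rule hull_lsubmod[OF A])
  have Kc: "?K \<subseteq> carrier A" by (rule hull_sub)
  have Is: "lsubmod R B ?I" by (rule lsubmod_image[OF A B pi Ks])
  have Ic: "?I \<subseteq> carrier B" using lsubmod_sub[OF Is] .
  obtain k q Lg where q: "q \<in> lhom R (freemod R k) ?B'" "q ` carrier (freemod R k) = carrier ?B'"
    and Lg: "finite Lg" "Lg \<subseteq> carrier (freemod R k)"
      "{v \<in> carrier (freemod R k). q v = \<zero>\<^bsub>?B'\<^esub>} = hull R (freemod R k) Lg"
    by (rule lfpE[OF Ifp])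
  let ?F = "freemod R k"
  have F: "lmod R ?F" by (rule freemod_lmod[OF R])
  interpret F: lmodule R ?F by (rule lmodule.intro) fact
  have qB: "q \<in> lhom R ?F B" by (rule lhom_from_sub[OF q(1) Ic])
  have qI: "q ` carrier ?F = ?I" using q(2) by simp
  have qker: "u \<in> carrier ?F \<Longrightarrow> q u = \<zero>\<^bsub>B\<^esub> \<Longrightarrow> u \<in> hull R ?F Lg" for u using Lg(3) by auto
  have Lker: "l \<in> carrier ?F \<and> q l = \<zero>\<^bsub>B\<^esub>" if "l \<in> Lg" for l
    using Lg(3) hull_incl[OF Lg(2), of R] that by auto
  define ks where "ks i = (SOME z. z \<in> ?K \<and> \<pi> z = q (ebas R i))" for i
  have ks: "ks i \<in> ?K \<and> \<pi> (ks i) = q (ebas R i)" if "i < k" for i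
  proof -
    have "q (ebas R i) \<in> ?I" using qI ebas_carrier[OF R that] by blast
    then obtain z where z: "z \<in> ?K" "q (ebas R i) = \<pi> z" by (rule imageE)
    show ?thesis unfolding ks_def by (rule someI[of "\<lambda>y. y \<in> ?K \<and> \<pi> y = q (ebas R i)" z]) (use z in simp)
  qed
  define w where "w = fmap R A ks k"
  have ksc: "ks i \<in> carrier A" if "i < k" for i using ks[OF that] Kc by blast
  have w: "w \<in> lhom R ?F A" unfolding w_def by (rule fmap_lhom[OF A ksc])
  have piw: "\<pi> (w v) = q v" if v: "v \<in> carrier ?F" for v
  proof (rule freemod_hom_eq[OF R B lhom_comp[OF w pi] qB _ v])
    fix i assume i: "i < k"
    show "\<pi> (w (ebas R i)) = q (ebas R i)" using fmap_ebas[OF A ksc i] ks[OF i] unfolding w_def by simp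
  qed
  have wK: "w v \<in> ?K" if v: "v \<in> carrier ?F" for v
  proof -
    have Bc: "ebas R ` {..<k} \<subseteq> carrier ?F" using ebas_carrier[OF R] by auto
    have "w ` carrier ?F = w ` hull R ?F (ebas R ` {..<k})" by (subst freemod_hull[OF R, of k]) (rule refl)
    also have "\<dots> = hull R A (w ` ebas R ` {..<k})" by (rule hull_image[OF F A w Bc])
    also have "\<dots> \<subseteq> ?K"
      by (rule hull_min[OF Ks]) (use fmap_ebas[OF A ksc] ks in \<open>auto simp: w_def\<close>)
    finally show ?thesis using v by blast
  qed
  define ux where "ux x = (SOME u. u \<in> carrier ?F \<and> q u = \<pi> x)" for x
  have ux: "ux x \<in> carrier ?F \<and> q (ux x) = \<pi> x" if "x \<in> ?K" for x
  proof -
    have "\<pi> x \<in> q ` carrier ?F" using qI that by blast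
    then obtain u where u: "u \<in> carrier ?F" "\<pi> x = q u" by (rule imageE)
    show ?thesis unfolding ux_def by (rule someI[of "\<lambda>v. v \<in> carrier ?F \<and> q v = \<pi> x" u]) (use u in simp)
  qed
  have XK: "X \<subseteq> ?K" by (rule hull_incl[OF X(2)])
  define Gen where "Gen = (\<lambda>x. x \<ominus>\<^bsub>A\<^esub> w (ux x)) ` X \<union> w ` Lg"
  have Genf: "finite Gen" unfolding Gen_def using X(1) Lg(1) by simp
  have gc: "x \<ominus>\<^bsub>A\<^esub> w (ux x) \<in> carrier A" if x: "x \<in> X" for x
  proof -
    have "x \<in> carrier A" "x \<in> ?K" using x X(2) XK by auto
    thus ?thesis using ux lhom_closed[OF w] by simp
  qed
  have Genc: "Gen \<subseteq> carrier A"
    unfolding Gen_def using gc lhom_closed[OF w] Lker by auto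
  let ?H = "hull R A Gen"
  have Hs: "lsubmod R A ?H" by (rule hull_lsubmod[OF A])
  let ?Kz = "{z \<in> ?K. \<pi> z = \<zero>\<^bsub>B\<^esub>}"
  have K0eq: "?Kz = ?K \<inter> {z \<in> carrier A. \<pi> z = \<zero>\<^bsub>B\<^esub>}" using Kc by blast
  have K0s: "lsubmod R A ?Kz" unfolding K0eq by (rule lsubmod_Int[OF Ks lsubmod_kernel[OF A B pi]])
  have "?Kz = ?H"
  proof
    show "?H \<subseteq> ?Kz"
    proof (rule hull_min[OF K0s])
      show "Gen \<subseteq> ?Kz"
      proof
        fix g assume "g \<in> Gen"
        then consider (a) x where "x \<in> X" "g = x \<ominus>\<^bsub>A\<^esub> w (ux x)" | (b) l where "l \<in> Lg" "g = w l"
          unfolding Gen_def by blast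
        thus "g \<in> ?Kz"
        proof cases
          case a
          have xK: "x \<in> ?K" using a XK by blast
          have u: "ux x \<in> carrier ?F" "q (ux x) = \<pi> x" using ux[OF xK] by auto
          have xc: "x \<in> carrier A" using a X(2) by blast
          have "g \<in> ?K" using a lsubmod_minus[OF A Ks xK wK[OF u(1)]] by simp
          moreover have "\<pi> g = \<zero>\<^bsub>B\<^esub>" using a lhom_minus[OF A B pi xc lhom_closed[OF w u(1)]] piw[OF u(1)] u(2)
            lhom_closed[OF pi xc] by (simp add: B.M.r_neg B.M.minus_eq)
          ultimately show ?thesis by simp
        next
          case b
          thus ?thesis using Lker[OF b(1)] wK piw by simp
        qed
      qed
    qed
    show "?Kz \<subseteq> ?H"
    proof
      fix z assume z: "z \<in> ?Kz"
      define T where "T = {z \<in> ?K. \<exists>u \<in> carrier ?F. \<pi> z = q u \<and> z \<ominus>\<^bsub>A\<^esub> w u \<in> ?H}"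
      have Ts: "lsubmod R A T" unfolding lsubmod_def
      proof (intro conjI ballI)
        show "T \<subseteq> carrier A" using Kc unfolding T_def by blast
        have "\<pi> \<zero>\<^bsub>A\<^esub> = q \<zero>\<^bsub>?F\<^esub>" using lhom_zero[OF A B pi] lhom_zero[OF F B qB] by simp
        moreover have "\<zero>\<^bsub>A\<^esub> \<ominus>\<^bsub>A\<^esub> w \<zero>\<^bsub>?F\<^esub> \<in> ?H" using lhom_zero[OF F A w] lsubmod_zero[OF Hs] by simp
        ultimately show "\<zero>\<^bsub>A\<^esub> \<in> T" unfolding T_def using lsubmod_zero[OF Ks] by blast
      next
        fix z1 z2 assume "z1 \<in> T" "z2 \<in> T"
        then obtain u1 u2 where z1: "z1 \<in> ?K" "u1 \<in> carrier ?F" "\<pi> z1 = q u1" "z1 \<ominus>\<^bsub>A\<^esub> w u1 \<in> ?H"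
          and z2: "z2 \<in> ?K" "u2 \<in> carrier ?F" "\<pi> z2 = q u2" "z2 \<ominus>\<^bsub>A\<^esub> w u2 \<in> ?H"
          unfolding T_def by blast
        have c: "z1 \<in> carrier A" "z2 \<in> carrier A" "w u1 \<in> carrier A" "w u2 \<in> carrier A"
          using z1 z2 Kc lhom_closed[OF w] by auto
        have "\<pi> (z1 \<oplus>\<^bsub>A\<^esub> z2) = q (u1 \<oplus>\<^bsub>?F\<^esub> u2)"
          using lhom_add[OF pi c(1,2)] lhom_add[OF qB z1(2) z2(2)] z1(3) z2(3) by simp
        moreover have "(z1 \<oplus>\<^bsub>A\<^esub> z2) \<ominus>\<^bsub>A\<^esub> w (u1 \<oplus>\<^bsub>?F\<^esub> u2) = (z1 \<ominus>\<^bsub>A\<^esub> w u1) \<oplus>\<^bsub>A\<^esub> (z2 \<ominus>\<^bsub>A\<^esub> w u2)"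
          using lhom_add[OF w z1(2) z2(2)] c by (simp add: A.M.t5)
        moreover have "(z1 \<ominus>\<^bsub>A\<^esub> w u1) \<oplus>\<^bsub>A\<^esub> (z2 \<ominus>\<^bsub>A\<^esub> w u2) \<in> ?H" by (rule lsubmod_add[OF Hs z1(4) z2(4)])
        moreover have "z1 \<oplus>\<^bsub>A\<^esub> z2 \<in> ?K" by (rule lsubmod_add[OF Ks z1(1) z2(1)])
        moreover have "u1 \<oplus>\<^bsub>?F\<^esub> u2 \<in> carrier ?F" using z1(2) z2(2) by simp
        ultimately show "z1 \<oplus>\<^bsub>A\<^esub> z2 \<in> T" unfolding T_def by auto
      next
        fix a z1 assume a: "a \<in> carrier R" and "z1 \<in> T"
        then obtain u1 where z1: "z1 \<in> ?K" "u1 \<in> carrier ?F" "\<pi> z1 = q u1" "z1 \<ominus>\<^bsub>A\<^esub> w u1 \<in> ?H"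
          unfolding T_def by blast
        have c: "z1 \<in> carrier A" "w u1 \<in> carrier A" using z1 Kc lhom_closed[OF w] by auto
        have "\<pi> (a \<odot>\<^bsub>A\<^esub> z1) = q (a \<odot>\<^bsub>?F\<^esub> u1)"
          using lhom_smult[OF pi a c(1)] lhom_smult[OF qB a z1(2)] z1(3) by simp
        moreover have "a \<odot>\<^bsub>A\<^esub> z1 \<ominus>\<^bsub>A\<^esub> w (a \<odot>\<^bsub>?F\<^esub> u1) = a \<odot>\<^bsub>A\<^esub> (z1 \<ominus>\<^bsub>A\<^esub> w u1)"
          using lhom_smult[OF w a z1(2)] c a by (simp add: A.smult_minus)
        moreover have "a \<odot>\<^bsub>A\<^esub> (z1 \<ominus>\<^bsub>A\<^esub> w u1) \<in> ?H" by (rule lsubmod_smult[OF Hs a z1(4)])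
        moreover have "a \<odot>\<^bsub>A\<^esub> z1 \<in> ?K" by (rule lsubmod_smult[OF Ks a z1(1)])
        moreover have "a \<odot>\<^bsub>?F\<^esub> u1 \<in> carrier ?F" using z1(2) a by simp
        ultimately show "a \<odot>\<^bsub>A\<^esub> z1 \<in> T" unfolding T_def by auto
      qed
      have "X \<subseteq> T"
      proof
        fix x assume x: "x \<in> X"
        have xK: "x \<in> ?K" using x XK by blast
        have "x \<ominus>\<^bsub>A\<^esub> w (ux x) \<in> ?H" using hull_incl[OF Genc, of R] x unfolding Gen_def by blast
        thus "x \<in> T" unfolding T_def using ux[OF xK] xK by (intro CollectI conjI bexI[of _ "ux x"]) auto
      qed
      hence "?K \<subseteq> T" by (rule hull_min[OF Ts])
      hence "z \<in> T" using z by blast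
      then obtain u where u: "u \<in> carrier ?F" "\<pi> z = q u" "z \<ominus>\<^bsub>A\<^esub> w u \<in> ?H" unfolding T_def by blast
      have "u \<in> hull R ?F Lg" using qker[OF u(1)] u(2) z by simp
      hence "w u \<in> w ` hull R ?F Lg" by blast
      also have "\<dots> = hull R A (w ` Lg)" by (rule hull_image[OF F A w Lg(2)])
      also have "\<dots> \<subseteq> ?H" by (rule hull_mono) (auto simp: Gen_def)
      finally have wu: "w u \<in> ?H" .
      have zc: "z \<in> carrier A" using z Kc by blast
      have "z = (z \<ominus>\<^bsub>A\<^esub> w u) \<oplus>\<^bsub>A\<^esub> w u" using zc lhom_closed[OF w u(1)] by (simp add: A.M.sub_add_cancel)
      thus "z \<in> ?H" using lsubmod_add[OF Hs u(3) wu] by simp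
    qed
  qed
  thus ?thesis unfolding lfingen_hull[OF A] using Genf Genc by blast
qed


lemma (in abelian_group) add_sub_cancel2: "x \<in> carrier G \<Longrightarrow> y \<in> carrier G \<Longrightarrow> x \<oplus> (y \<ominus> x) = y"
  by (simp add: minus_eq c1)

lemma lfingen_shrink:
  assumes "lfingen R M S" "S \<subseteq> C" "C \<subseteq> carrier M"
  shows "lfingen R (M\<lparr>carrier := C\<rparr>) S"
proof -
  from assms(1) obtain X where X: "finite X" "X \<subseteq> S" "\<forall>T. lsubmod R M T \<and> X \<subseteq> T \<longrightarrow> S \<subseteq> T"
    and s: "lsubmod R M S" by (auto simp: lfingen_def)
  have "lsubmod R (M\<lparr>carrier := C\<rparr>) S" by (rule lsubmod_in_sub[OF s assms(2)])
  moreover have "\<forall>T. lsubmod R (M\<lparr>carrier := C\<rparr>) T \<and> X \<subseteq> T \<longrightarrow> S \<subseteq> T"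
    using X(3) lsubmod_mono_mod[OF _ assms(3)] by blast
  ultimately show ?thesis unfolding lfingen_def using X(1,2) by blast
qed

lemma lhom_factor_inj:
  assumes M: "lmod R M" and i: "i \<in> lhom R M E" and ii: "inj_on i (carrier M)"
    and g: "g \<in> lhom R A E" and gi: "\<And>a. a \<in> carrier A \<Longrightarrow> g a \<in> i ` carrier M"
  shows "(\<lambda>a. inv_into (carrier M) i (g a)) \<in> lhom R A M"
proof -
  interpret M: lmodule R M by (rule lmodule.intro) fact
  let ?iv = "inv_into (carrier M) i"
  have ivc: "?iv y \<in> carrier M" "i (?iv y) = y" if "y \<in> i ` carrier M" for y
    using that by (auto simp: inv_into_into f_inv_into_f)
  have ivi: "?iv (i x) = x" if "x \<in> carrier M" for x using ii that by simp
  show ?thesis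
  proof (rule lhomI)
    fix a assume "a \<in> carrier A" thus "?iv (g a) \<in> carrier M" using ivc gi by blast
  next
    fix a b assume ab: "a \<in> carrier A" "b \<in> carrier A"
    have "g (a \<oplus>\<^bsub>A\<^esub> b) = i (?iv (g a)) \<oplus>\<^bsub>E\<^esub> i (?iv (g b))" using lhom_add[OF g ab] ivc gi ab by simp
    also have "\<dots> = i (?iv (g a) \<oplus>\<^bsub>M\<^esub> ?iv (g b))" using lhom_add[OF i] ivc gi ab by simp
    finally show "?iv (g (a \<oplus>\<^bsub>A\<^esub> b)) = ?iv (g a) \<oplus>\<^bsub>M\<^esub> ?iv (g b)"
      using ivi ivc gi ab by simp
  next
    fix r a assume ra: "r \<in> carrier R" "a \<in> carrier A"
    have "g (r \<odot>\<^bsub>A\<^esub> a) = r \<odot>\<^bsub>E\<^esub> i (?iv (g a))" using lhom_smult[OF g ra] ivc gi ra by simp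
    also have "\<dots> = i (r \<odot>\<^bsub>M\<^esub> ?iv (g a))" using lhom_smult[OF i] ivc gi ra by simp
    finally show "?iv (g (r \<odot>\<^bsub>A\<^esub> a)) = r \<odot>\<^bsub>M\<^esub> ?iv (g a)"
      using ivi ivc gi ra by simp
  qed
qed

lemma baer:
  fixes M :: "('a,'m) module"
  assumes lc: "left_coherent R" and M: "lmod R M" and sub: "kerDefect_sub_kerEv R M"
  shows "lfingen R (freemod R n) K \<Longrightarrow> \<phi> \<in> lhom R ((freemod R n)\<lparr>carrier := K\<rparr>) M \<Longrightarrow>
    \<exists>\<beta>\<in>lhom R (freemod R n) M. \<forall>x\<in>K. \<beta> x = \<phi> x"
proof (induction n arbitrary: K \<phi>)
  have R: "ring R" using lc by (simp add: left_coherent_def)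
  interpret M: lmodule R M by (rule lmodule.intro) fact
  {
    case 0
    have Ks: "lsubmod R (freemod R 0) K" using "0.prems"(1) by (simp add: lfingen_def)
    have Kl: "lmod R ((freemod R 0)\<lparr>carrier := K\<rparr>)" by (rule lsubmod_lmod[OF freemod_lmod[OF R] Ks])
    have z: "\<phi> (\<lambda>i. \<zero>\<^bsub>R\<^esub>) = \<zero>\<^bsub>M\<^esub>" using lhom_zero[OF Kl M "0.prems"(2)] by (simp add: freemod_simps)
    have "\<forall>x\<in>K. x = (\<lambda>i. \<zero>\<^bsub>R\<^esub>)" using lsubmod_sub[OF Ks] by (auto simp: freemod_simps)
    hence "\<forall>x\<in>K. \<zero>\<^bsub>M\<^esub> = \<phi> x" using z by auto
    thus ?case using lhom_zero_map[OF M] by (intro bexI[of _ "\<lambda>x. \<zero>\<^bsub>M\<^esub>"]) auto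
  next
    case (Suc n)
    let ?F' = "freemod R (Suc n)"
    let ?F = "freemod R n"
    let ?RL = "ring_lmod R"
    have F': "lmod R ?F'" and F: "lmod R ?F" and RL: "lmod R ?RL"
      using freemod_lmod[OF R] ring_lmod_lmod[OF R] by auto
    interpret F': lmodule R ?F' by (rule lmodule.intro) fact
    have Ks: "lsubmod R ?F' K" using Suc.prems(1) by (simp add: lfingen_def)
    have Kc: "K \<subseteq> carrier ?F'" using lsubmod_sub[OF Ks] .
    obtain X where X: "finite X" "X \<subseteq> carrier ?F'" "K = hull R ?F' X"
      using Suc.prems(1) unfolding lfingen_hull[OF F'] by blast
    define \<pi> where "\<pi> v = v n" for v :: "nat \<Rightarrow> 'a"
    have pi: "\<pi> \<in> lhom R ?F' ?RL" unfolding \<pi>_def by (rule lhomI) (auto simp: freemod_simps)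
    let ?I = "\<pi> ` K"
    have Ifg: "lfingen R ?RL ?I"
    proof -
      have "?I = hull R ?RL (\<pi> ` X)" using X(3) hull_image[OF F' RL pi X(2)] by simp
      moreover have "\<pi> ` X \<subseteq> carrier ?RL" using X(2) lhom_closed[OF pi] by auto
      ultimately show ?thesis unfolding lfingen_hull[OF RL] using X(1) by (intro exI[of _ "\<pi> ` X"]) simp
    qed
    have Ifp: "lfp R (?RL\<lparr>carrier := ?I\<rparr>)" using lc Ifg by (simp add: left_coherent_def)
    let ?Kz = "{z \<in> K. \<pi> z = \<zero>\<^bsub>?RL\<^esub>}"
    have K0fg': "lfingen R ?F' ?Kz"
      using kernel_fg[OF F' RL pi X(1,2)] Ifp X(3) by simp
    have K0c: "?Kz \<subseteq> carrier ?F"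
    proof
      fix x assume x: "x \<in> ?Kz"
      hence xc: "x \<in> carrier ?F'" and xn: "x n = \<zero>\<^bsub>R\<^esub>" using Kc by (auto simp: \<pi>_def)
      have "x i = \<zero>\<^bsub>R\<^esub>" if "n \<le> i" for i
      proof (cases "i = n")
        case True thus ?thesis using xn by simp
      next
        case False hence "Suc n \<le> i" using that by simp
        thus ?thesis using xc by (simp add: freemod_simps)
      qed
      thus "x \<in> carrier ?F" using xc by (simp add: freemod_simps)
    qed
    have rec: "?F = ?F'\<lparr>carrier := carrier ?F\<rparr>" by (rule freemod_restrict)
    have K0fg: "lfingen R ?F ?Kz"
      using lfingen_shrink[OF K0fg' K0c freemod_mono[of n "Suc n" R]] rec by simp
    have rec2: "?F\<lparr>carrier := ?Kz\<rparr> = (?F'\<lparr>carrier := K\<rparr>)\<lparr>carrier := ?Kz\<rparr>" by (simp add: freemod_def)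
    have phi0: "\<phi> \<in> lhom R (?F\<lparr>carrier := ?Kz\<rparr>) M"
      unfolding rec2 by (rule lhom_restrict[OF Suc.prems(2)]) auto
    obtain \<beta>0 where b0: "\<beta>0 \<in> lhom R ?F M" "\<forall>x\<in>?Kz. \<beta>0 x = \<phi> x" using Suc.IH[OF K0fg phi0] by blast
    define P where "P v = (\<lambda>i. if i < n then v i else \<zero>\<^bsub>R\<^esub>)" for v :: "nat \<Rightarrow> 'a"
    have P: "P \<in> lhom R ?F' ?F" unfolding P_def by (rule lhomI) (auto simp: freemod_simps)
    have PK0: "P x = x" if "x \<in> ?Kz" for x
    proof
      fix i show "P x i = x i" using K0c that by (auto simp: P_def freemod_simps)
    qed
    define \<beta>1 where "\<beta>1 v = \<beta>0 (P v)" for v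
    have b1: "\<beta>1 \<in> lhom R ?F' M" unfolding \<beta>1_def by (rule lhom_comp[OF P b0(1)])
    let ?Km = "?F'\<lparr>carrier := K\<rparr>"
    have Kml: "lmod R ?Km" by (rule lsubmod_lmod[OF F' Ks])
    have b1K: "\<beta>1 \<in> lhom R ?Km M" by (rule lhom_restrict[OF b1 Kc])
    define \<psi> where "\<psi> x = \<phi> x \<ominus>\<^bsub>M\<^esub> \<beta>1 x" for x
    have psi: "\<psi> \<in> lhom R ?Km M" unfolding \<psi>_def by (rule lhom_minus_map[OF Kml M Suc.prems(2) b1K])
    let ?Im = "?RL\<lparr>carrier := ?I\<rparr>"
    have Il: "lmod R ?Im" using Ifp by (simp add: lfp_def)
    have piK: "\<pi> \<in> lhom R ?Km ?Im" by (rule lhom_into_sub[OF lhom_restrict[OF pi Kc]]) simp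
    have piS: "\<pi> ` carrier ?Km = carrier ?Im" by simp
    have van: "\<psi> x = \<zero>\<^bsub>M\<^esub>" if "x \<in> carrier ?Km" "\<pi> x = \<zero>\<^bsub>?Im\<^esub>" for x
    proof -
      have x0: "x \<in> ?Kz" using that by simp
      have "\<beta>1 x = \<phi> x" using PK0[OF x0] b0(2) x0 by (simp add: \<beta>1_def)
      moreover have "\<phi> x \<in> carrier M" using lhom_closed[OF Suc.prems(2)] that by simp
      ultimately show ?thesis by (simp add: \<psi>_def M.M.r_neg M.M.minus_eq)
    qed
    define \<chi> where "\<chi> z = \<psi> (SOME x. x \<in> carrier ?Km \<and> \<pi> x = z)" for z
    have chi: "\<chi> \<in> lhom R ?Im M" unfolding \<chi>_def by (rule surj_factor(1)[OF Kml Il M piK piS psi van])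
    have chipi: "\<chi> (\<pi> x) = \<psi> x" if "x \<in> K" for x
      unfolding \<chi>_def using surj_factor(2)[OF Kml Il M piK piS psi van, of x] that by simp
    have RLfp: "lfp R ?RL" by (rule ring_lmod_lfp[OF lc])
    have Isub: "?I \<subseteq> carrier R" using lhom_closed[OF pi] Kc by auto
    have idh: "(\<lambda>x. x) \<in> lhom R ?Im ?RL" by (rule lhom_from_sub[OF lhom_id]) (use Isub in simp)
    obtain \<chi>' where chi': "\<chi>' \<in> lhom R ?RL M" "\<forall>x\<in>carrier ?Im. \<chi>' x = \<chi> x"
      using sub_any[OF sub M Ifp RLfp idh _ chi] by auto
    define \<beta> where "\<beta> v = \<beta>1 v \<oplus>\<^bsub>M\<^esub> \<chi>' (\<pi> v)" for v
    have b: "\<beta> \<in> lhom R ?F' M" unfolding \<beta>_def by (rule lhom_plus[OF M b1 lhom_comp[OF pi chi'(1)]])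
    have "\<forall>x\<in>K. \<beta> x = \<phi> x"
    proof
      fix x assume x: "x \<in> K"
      have "\<chi>' (\<pi> x) = \<psi> x" using chi'(2) chipi[OF x] x by simp
      moreover have "\<beta>1 x \<in> carrier M" "\<phi> x \<in> carrier M"
        using lhom_closed[OF b1] lhom_closed[OF Suc.prems(2)] x Kc by auto
      ultimately show "\<beta> x = \<phi> x" by (simp add: \<beta>_def \<psi>_def M.M.add_sub_cancel2)
    qed
    thus ?case using b by blast
  }
qed


lemma split_ext:
  fixes M :: "('a,'m) module" and N :: "('a,'n) module" and E :: "('a,'e) module"
  assumes lc: "left_coherent R" and M: "lmod R M" and sub: "kerDefect_sub_kerEv R M"
    and N: "lfp R N" and E: "lmod R E"
    and i: "i \<in> lhom R M E" and p: "p \<in> lhom R E N" and ii: "inj_on i (carrier M)"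
    and ps: "p ` carrier E = carrier N" and ker: "i ` carrier M = {e \<in> carrier E. p e = \<zero>\<^bsub>N\<^esub>}"
  shows "\<exists>r \<in> lhom R E M. \<forall>x\<in>carrier M. r (i x) = x"
proof -
  have R: "ring R" using lc by (simp add: left_coherent_def)
  have Nl: "lmod R N" using N by (simp add: lfp_def)
  interpret M: lmodule R M by (rule lmodule.intro) fact
  interpret N: lmodule R N by (rule lmodule.intro) fact
  interpret E: lmodule R E by (rule lmodule.intro) fact
  obtain n f G where f: "f \<in> lhom R (freemod R n) N" "f ` carrier (freemod R n) = carrier N"
    and G: "finite G" "G \<subseteq> carrier (freemod R n)"
      "{v \<in> carrier (freemod R n). f v = \<zero>\<^bsub>N\<^esub>} = hull R (freemod R n) G"
    by (rule lfpE[OF N])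
  let ?F = "freemod R n"
  have F: "lmod R ?F" by (rule freemod_lmod[OF R])
  interpret F: lmodule R ?F by (rule lmodule.intro) fact
  define es where "es j = (SOME e. e \<in> carrier E \<and> p e = f (ebas R j))" for j
  have es: "es j \<in> carrier E \<and> p (es j) = f (ebas R j)" if "j < n" for j
  proof -
    have "f (ebas R j) \<in> p ` carrier E" using ps lhom_closed[OF f(1) ebas_carrier[OF R that]] by simp
    then obtain e where e: "e \<in> carrier E" "f (ebas R j) = p e" by (rule imageE)
    show ?thesis unfolding es_def by (rule someI[of "\<lambda>y. y \<in> carrier E \<and> p y = f (ebas R j)" e]) (use e in simp)
  qed
  define g where "g = fmap R E es n"
  have esc: "es j \<in> carrier E" if "j < n" for j using es[OF that] by blast
  have g: "g \<in> lhom R ?F E" unfolding g_def by (rule fmap_lhom[OF E esc])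
  have pg: "p (g v) = f v" if v: "v \<in> carrier ?F" for v
  proof (rule freemod_hom_eq[OF R Nl lhom_comp[OF g p] f(1) _ v])
    fix j assume j: "j < n"
    show "p (g (ebas R j)) = f (ebas R j)" using fmap_ebas[OF E esc j] es[OF j] unfolding g_def by simp
  qed
  let ?K = "{v \<in> carrier ?F. f v = \<zero>\<^bsub>N\<^esub>}"
  have Kfg: "lfingen R ?F ?K" unfolding lfingen_hull[OF F] using G by blast
  have Kc: "?K \<subseteq> carrier ?F" by blast
  have gK: "g v \<in> i ` carrier M" if "v \<in> ?K" for v
    using ker that pg lhom_closed[OF g] by auto
  define \<phi> where "\<phi> v = inv_into (carrier M) i (g v)" for v
  have phi: "\<phi> \<in> lhom R (?F\<lparr>carrier := ?K\<rparr>) M"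
    unfolding \<phi>_def by (rule lhom_factor_inj[OF M i ii lhom_restrict[OF g Kc]]) (use gK in simp)
  have iphi: "i (\<phi> v) = g v" if "v \<in> ?K" for v
    using gK[OF that] unfolding \<phi>_def by (auto simp: f_inv_into_f)
  obtain \<beta> where b: "\<beta> \<in> lhom R ?F M" "\<forall>x\<in>?K. \<beta> x = \<phi> x" using baer[OF lc M sub Kfg phi] by blast
  let ?P = "prodmod M ?F"
  have Pl: "lmod R ?P" by (rule prodmod_lmod[OF M F])
  define \<Theta> where "\<Theta> z = i (fst z) \<oplus>\<^bsub>E\<^esub> g (snd z)" for z :: "'m \<times> (nat \<Rightarrow> 'a)"
  define \<Psi> where "\<Psi> z = fst z \<oplus>\<^bsub>M\<^esub> \<beta> (snd z)" for z :: "'m \<times> (nat \<Rightarrow> 'a)"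
  have pr1: "fst \<in> lhom R ?P M" by (rule lhomI) auto
  have pr2: "snd \<in> lhom R ?P ?F" by (rule lhomI) auto
  have Th: "\<Theta> \<in> lhom R ?P E" unfolding \<Theta>_def by (rule lhom_plus[OF E lhom_comp[OF pr1 i] lhom_comp[OF pr2 g]])
  have Ps: "\<Psi> \<in> lhom R ?P M" unfolding \<Psi>_def by (rule lhom_plus[OF M pr1 lhom_comp[OF pr2 b(1)]])
  have Thm: "\<Theta> (m, \<zero>\<^bsub>?F\<^esub>) = i m" if "m \<in> carrier M" for m
    using lhom_zero[OF F E g] lhom_closed[OF i that] by (simp add: \<Theta>_def)
  have ThS: "\<Theta> ` carrier ?P = carrier E"
  proof
    show "\<Theta> ` carrier ?P \<subseteq> carrier E" using lhom_closed[OF Th] by blast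
    show "carrier E \<subseteq> \<Theta> ` carrier ?P"
    proof
      fix e assume e: "e \<in> carrier E"
      have "p e \<in> f ` carrier ?F" using f(2) lhom_closed[OF p e] by simp
      then obtain v where v: "v \<in> carrier ?F" "p e = f v" by (rule imageE)
      have gv: "g v \<in> carrier E" using lhom_closed[OF g v(1)] .
      have "p (e \<ominus>\<^bsub>E\<^esub> g v) = \<zero>\<^bsub>N\<^esub>" using lhom_minus[OF E Nl p e gv] pg[OF v(1)] v(2) lhom_closed[OF p e]
        by (simp add: N.M.minus_zero_iff)
      hence "e \<ominus>\<^bsub>E\<^esub> g v \<in> i ` carrier M" using ker e gv by simp
      then obtain m where m: "m \<in> carrier M" "e \<ominus>\<^bsub>E\<^esub> g v = i m" by auto
      have "\<Theta> (m, v) = (e \<ominus>\<^bsub>E\<^esub> g v) \<oplus>\<^bsub>E\<^esub> g v" using m by (simp add: \<Theta>_def)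
      also have "\<dots> = e" using e gv by (rule E.M.sub_add_cancel)
      finally have "\<Theta> (m, v) = e" .
      moreover have "(m, v) \<in> carrier ?P" using m v by simp
      ultimately show "e \<in> \<Theta> ` carrier ?P" by (metis image_eqI)
    qed
  qed
  have van: "\<Psi> z = \<zero>\<^bsub>M\<^esub>" if z: "z \<in> carrier ?P" "\<Theta> z = \<zero>\<^bsub>E\<^esub>" for z
  proof -
    obtain m v where mv: "z = (m, v)" "m \<in> carrier M" "v \<in> carrier ?F" using z(1) by auto
    have im: "i m \<in> carrier E" "g v \<in> carrier E" using lhom_closed[OF i mv(2)] lhom_closed[OF g mv(3)] by auto
    have "p (i m) = \<zero>\<^bsub>N\<^esub>" using ker mv(2) by blast
    hence "p (i m \<oplus>\<^bsub>E\<^esub> g v) = f v" using lhom_add[OF p im] pg[OF mv(3)] lhom_closed[OF f(1) mv(3)] by simp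
    moreover have "p (i m \<oplus>\<^bsub>E\<^esub> g v) = \<zero>\<^bsub>N\<^esub>" using z(2) mv(1) lhom_zero[OF E Nl p] by (simp add: \<Theta>_def)
    ultimately have vK: "v \<in> ?K" using mv(3) by simp
    have "i (m \<oplus>\<^bsub>M\<^esub> \<phi> v) = \<zero>\<^bsub>E\<^esub>"
    proof -
      have pv: "\<phi> v \<in> carrier M" using lhom_closed[OF phi] vK by simp
      have "i (m \<oplus>\<^bsub>M\<^esub> \<phi> v) = i m \<oplus>\<^bsub>E\<^esub> g v" using lhom_add[OF i mv(2) pv] iphi[OF vK] by simp
      thus ?thesis using z(2) mv(1) by (simp add: \<Theta>_def)
    qed
    hence "i (m \<oplus>\<^bsub>M\<^esub> \<phi> v) = i \<zero>\<^bsub>M\<^esub>" using lhom_zero[OF M E i] by simp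
    hence "m \<oplus>\<^bsub>M\<^esub> \<phi> v = \<zero>\<^bsub>M\<^esub>" using ii lhom_closed[OF phi] vK mv(2) unfolding inj_on_def by simp
    thus ?thesis using b(2) vK mv(1) by (simp add: \<Psi>_def)
  qed
  define r where "r e = \<Psi> (SOME z. z \<in> carrier ?P \<and> \<Theta> z = e)" for e
  have r: "r \<in> lhom R E M" unfolding r_def by (rule surj_factor(1)[OF Pl E M Th ThS Ps van])
  have "\<forall>m\<in>carrier M. r (i m) = m"
  proof
    fix m assume m: "m \<in> carrier M"
    have z: "(m, \<zero>\<^bsub>?F\<^esub>) \<in> carrier ?P" using m by simp
    have "r (\<Theta> (m, \<zero>\<^bsub>?F\<^esub>)) = \<Psi> (m, \<zero>\<^bsub>?F\<^esub>)"
      unfolding r_def by (rule surj_factor(2)[OF Pl E M Th ThS Ps van z])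
    thus "r (i m) = m" using Thm[OF m] lhom_zero[OF F M b(1)] m by (simp add: \<Psi>_def)
  qed
  thus ?thesis using r by blast
qed

lemma sub_fpinj:
  fixes M :: "('a,'m) module"
  assumes lc: "left_coherent R" and M: "lmod R M" and sub: "kerDefect_sub_kerEv R M"
  shows "fp_injective R M"
  unfolding fp_injective_def ext1_zero_def
proof (intro allI impI)
  fix N :: "'a fpmod" and E :: "('a, 'm \<times> (nat \<Rightarrow> 'a) set) module" and i p
  assume N: "lfp R N" and h: "lmod R E \<and> i \<in> lhom R M E \<and> p \<in> lhom R E N \<and> inj_on i (carrier M) \<and>
    p ` carrier E = carrier N \<and> i ` carrier M = {e \<in> carrier E. p e = \<zero>\<^bsub>N\<^esub>}"
  hence h': "lmod R E" "i \<in> lhom R M E" "p \<in> lhom R E N" "inj_on i (carrier M)"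
    "p ` carrier E = carrier N" "i ` carrier M = {e \<in> carrier E. p e = \<zero>\<^bsub>N\<^esub>}" by auto
  show "\<exists>r\<in>lhom R E M. \<forall>x\<in>carrier M. r (i x) = x"
    by (rule split_ext[OF lc M sub N h'])
qed


lemma eq_cogen:
  fixes M :: "('a,'m) module"
  assumes M: "lmod R M" and eq: "kerDefect_eq_kerEv R M"
  shows "fp_cogenerator R M"
  unfolding fp_cogenerator_def
proof (intro allI impI)
  fix A B :: "'a fpmod" and f g
  assume "lfp R A \<and> lfp R B \<and> f \<in> lhom R A B \<and> g \<in> lhom R A B \<and>
    (\<forall>h\<in>lhom R B M. \<forall>x\<in>carrier A. h (f x) = h (g x))"
  hence A: "lfp R A" and B: "lfp R B" and f: "f \<in> lhom R A B" and g: "g \<in> lhom R A B"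
    and hyp: "\<forall>h\<in>lhom R B M. \<forall>x\<in>carrier A. h (f x) = h (g x)" by auto
  have Al: "lmod R A" and Bl: "lmod R B" using A B by (auto simp: lfp_def)
  interpret M: lmodule R M by (rule lmodule.intro) fact
  interpret B: lmodule R B by (rule lmodule.intro) fact
  show "\<forall>x\<in>carrier A. f x = g x"
  proof (rule ccontr)
    assume "\<not> (\<forall>x\<in>carrier A. f x = g x)"
    then obtain x0 where x0: "x0 \<in> carrier A" "f x0 \<noteq> g x0" by blast
    define y where "y = f x0 \<ominus>\<^bsub>B\<^esub> g x0"
    have fc: "f x0 \<in> carrier B" "g x0 \<in> carrier B" using lhom_closed[OF f x0(1)] lhom_closed[OF g x0(1)] by auto
    have yc: "y \<in> carrier B" using fc by (simp add: y_def)
    have yn: "y \<noteq> \<zero>\<^bsub>B\<^esub>" using x0(2) fc B.M.minus_zero_iff by (simp add: y_def)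
    let ?S = "hull R B {y}"
    have Sfg: "lfingen R B ?S" unfolding lfingen_hull[OF Bl] using yc by (intro exI[of _ "{y}"]) simp
    obtain C :: "'a fpmod" and c where C: "lfp R C" "c \<in> lhom R B C" "c ` carrier B = carrier C"
      "\<And>z. z \<in> carrier B \<Longrightarrow> c z = \<zero>\<^bsub>C\<^esub> \<longleftrightarrow> z \<in> ?S"
      by (rule coker[OF B Sfg]) blast
    have Cl: "lmod R C" using C(1) by (simp add: lfp_def)
    have yS: "y \<in> ?S" using hull_incl[of "{y}" B R] yc by simp
    have "\<not> defect_zero B C c" unfolding defect_zero_def using C(4)[OF yc] yS yc yn by blast
    hence "\<not> ev_zero R B C c M" using eq B C(1,2) unfolding kerDefect_eq_kerEv_def by blast
    then obtain h where h: "h \<in> lhom R B M" and nb: "\<not> (\<exists>\<beta>\<in>lhom R C M. \<forall>x\<in>carrier B. \<beta> (c x) = h x)"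
      unfolding ev_zero_def by blast
    have hy: "h y = \<zero>\<^bsub>M\<^esub>"
    proof -
      have "h y = h (f x0) \<ominus>\<^bsub>M\<^esub> h (g x0)" using lhom_minus[OF Bl M h fc] by (simp add: y_def)
      moreover have "h (f x0) = h (g x0)" using hyp h x0(1) by blast
      ultimately show ?thesis using lhom_closed[OF h fc(2)] by (simp add: M.M.r_neg M.M.minus_eq)
    qed
    have hS: "?S \<subseteq> {z \<in> carrier B. h z = \<zero>\<^bsub>M\<^esub>}"
      by (rule hull_min[OF lsubmod_kernel[OF Bl M h]]) (use yc hy in simp)
    have van: "h z = \<zero>\<^bsub>M\<^esub>" if "z \<in> carrier B" "c z = \<zero>\<^bsub>C\<^esub>" for z using C(4) that hS by blast
    have "(\<lambda>w. h (SOME x. x \<in> carrier B \<and> c x = w)) \<in> lhom R C M"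
      by (rule surj_factor(1)[OF Bl Cl M C(2) C(3) h van])
    moreover have "\<forall>x\<in>carrier B. h (SOME z. z \<in> carrier B \<and> c z = c x) = h x"
      using surj_factor(2)[OF Bl Cl M C(2) C(3) h van] by blast
    ultimately have "\<exists>\<beta>\<in>lhom R C M. \<forall>x\<in>carrier B. \<beta> (c x) = h x"
      by (intro bexI[of _ "\<lambda>w. h (SOME x. x \<in> carrier B \<and> c x = w)"]) auto
    thus False using nb by blast
  qed
qed

lemma freemod1_lfp:
  assumes R: "ring R"
  shows "lfp R (freemod R 1)"
proof -
  have F: "lmod R (freemod R 1)" by (rule freemod_lmod[OF R])
  interpret F: lmodule R "freemod R 1" by (rule lmodule.intro) fact
  have z: "\<zero>\<^bsub>freemod R 1\<^esub> \<in> carrier (freemod R 1)" by (rule F.M.zero_closed)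
  have "{v \<in> carrier (freemod R 1). v = \<zero>\<^bsub>freemod R 1\<^esub>} = {\<zero>\<^bsub>freemod R 1\<^esub>}" using z by blast
  hence "lfingen R (freemod R 1) {v \<in> carrier (freemod R 1). (\<lambda>x. x) v = \<zero>\<^bsub>freemod R 1\<^esub>}"
    using zero_submod_fg[OF F] by simp
  thus ?thesis unfolding lfp_def using F lhom_id by blast
qed

lemma cogen_defect:
  fixes M :: "('a,'m) module" and N N' :: "'a fpmod"
  assumes M: "lmod R M" and cg: "fp_cogenerator R M" and N: "lfp R N" and N': "lfp R N'"
    and a: "\<alpha> \<in> lhom R N N'" and ev: "ev_zero R N N' \<alpha> M"
  shows "defect_zero N N' \<alpha>"
  unfolding defect_zero_def
proof (intro ballI impI)
  fix x assume x: "x \<in> carrier N" and ax: "\<alpha> x = \<zero>\<^bsub>N'\<^esub>"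
  have Nl: "lmod R N" and N'l: "lmod R N'" using N N' by (auto simp: lfp_def)
  have R: "ring R" using lmod_ring[OF M] .
  interpret M: lmodule R M by (rule lmodule.intro) fact
  interpret N: lmodule R N by (rule lmodule.intro) fact
  let ?F = "freemod R 1"
  have F: "lmod R ?F" by (rule freemod_lmod[OF R])
  obtain A :: "'a fpmod" and t where At: "lfp R A" "t \<in> lhom R ?F A" "bij_betw t (carrier ?F) (carrier A)"
    by (rule fpcopy[OF freemod1_lfp[OF R]])
  have Al: "lmod R A" using At(1) by (simp add: lfp_def)
  define ti where "ti = inv_into (carrier ?F) t"
  have ti: "ti \<in> lhom R A ?F" unfolding ti_def by (rule lhom_inv[OF At(2) At(3) F])
  have tit: "ti (t v) = v" if "v \<in> carrier ?F" for v using At(3) that unfolding ti_def bij_betw_def by simp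
  define w where "w = fmap R N (\<lambda>_. x) 1"
  have w: "w \<in> lhom R ?F N" unfolding w_def by (rule fmap_lhom[OF Nl]) (use x in simp)
  have we: "w (ebas R 0) = x" unfolding w_def by (rule fmap_ebas[OF Nl]) (use x in simp_all)
  have aw: "\<alpha> (w v) = \<zero>\<^bsub>N'\<^esub>" if v: "v \<in> carrier ?F" for v
  proof -
    have "\<alpha> (w v) = (\<lambda>u. \<zero>\<^bsub>N'\<^esub>) v"
    proof (rule freemod_hom_eq[OF R N'l lhom_comp[OF w a] lhom_zero_map[OF N'l] _ v])
      fix k :: nat assume "k < 1" thus "\<alpha> (w (ebas R k)) = \<zero>\<^bsub>N'\<^esub>" using we ax by simp
    qed
    thus ?thesis by simp
  qed
  define fa where "fa z = w (ti z)" for z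
  have fa: "fa \<in> lhom R A N" unfolding fa_def by (rule lhom_comp[OF ti w])
  have ga: "(\<lambda>z. \<zero>\<^bsub>N\<^esub>) \<in> lhom R A N" by (rule lhom_zero_map[OF Nl])
  have "\<forall>h\<in>lhom R N M. \<exists>\<beta>. \<beta> \<in> lhom R N' M \<and> (\<forall>z\<in>carrier N. \<beta> (\<alpha> z) = h z)"
    using ev unfolding ev_zero_def by blast
  from bchoice[OF this] obtain \<beta> where bb: "\<forall>h\<in>lhom R N M. \<beta> h \<in> lhom R N' M \<and> (\<forall>z\<in>carrier N. \<beta> h (\<alpha> z) = h z)"
    by blast
  have b: "\<beta> h \<in> lhom R N' M" "\<forall>z\<in>carrier N. \<beta> h (\<alpha> z) = h z" if "h \<in> lhom R N M" for h
    using bb that by auto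
  have hyp: "\<forall>h\<in>lhom R N M. \<forall>z\<in>carrier A. h (fa z) = h \<zero>\<^bsub>N\<^esub>"
  proof (intro ballI)
    fix h z assume h: "h \<in> lhom R N M" and z: "z \<in> carrier A"
    have tz: "ti z \<in> carrier ?F" using lhom_closed[OF ti z] .
    have "h (fa z) = \<beta> h (\<alpha> (fa z))" using b(2)[OF h] lhom_closed[OF fa z] by simp
    also have "\<dots> = \<beta> h \<zero>\<^bsub>N'\<^esub>" using aw[OF tz] by (simp add: fa_def)
    also have "\<dots> = \<zero>\<^bsub>M\<^esub>" by (rule lhom_zero[OF N'l M b(1)[OF h]])
    also have "\<dots> = h \<zero>\<^bsub>N\<^esub>" using lhom_zero[OF Nl M h] by simp
    finally show "h (fa z) = h \<zero>\<^bsub>N\<^esub>" .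
  qed
  have "\<forall>z\<in>carrier A. fa z = \<zero>\<^bsub>N\<^esub>"
    using cg[unfolded fp_cogenerator_def, rule_format, OF conjI[OF At(1) conjI[OF N conjI[OF fa conjI[OF ga hyp]]]]] by blast
  moreover have "t (ebas R 0) \<in> carrier A" using lhom_closed[OF At(2) ebas_carrier[OF R]] by simp
  ultimately have "fa (t (ebas R 0)) = \<zero>\<^bsub>N\<^esub>" by blast
  thus "x = \<zero>\<^bsub>N\<^esub>" using tit[OF ebas_carrier[OF R]] we by (simp add: fa_def)
qed

theorem mainTheorem9:
  fixes R :: "'a ring" and M :: "('a, 'm) module"
  assumes "left_coherent R" and "lmod R M"
  shows "(kerDefect_sub_kerEv R M \<longleftrightarrow> fp_injective R M) \<and>
         (kerDefect_eq_kerEv R M \<longleftrightarrow> fp_injective R M \<and> fp_cogenerator R M)"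
proof -
  have p1: "kerDefect_sub_kerEv R M \<longleftrightarrow> fp_injective R M"
    using sub_fpinj[OF assms] fpinj_sub[OF assms(2)] by blast
  have eqsub: "kerDefect_eq_kerEv R M \<Longrightarrow> kerDefect_sub_kerEv R M"
    unfolding kerDefect_eq_kerEv_def kerDefect_sub_kerEv_def by blast
  have p2: "kerDefect_eq_kerEv R M \<longleftrightarrow> fp_injective R M \<and> fp_cogenerator R M"
  proof
    assume e: "kerDefect_eq_kerEv R M"
    show "fp_injective R M \<and> fp_cogenerator R M" using p1 eqsub[OF e] eq_cogen[OF assms(2) e] by blast
  next
    assume fc: "fp_injective R M \<and> fp_cogenerator R M"
    hence s: "kerDefect_sub_kerEv R M" using p1 by blast
    show "kerDefect_eq_kerEv R M" unfolding kerDefect_eq_kerEv_def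
    proof (intro allI impI)
      fix N N' :: "'a fpmod" and \<alpha>
      assume h: "lfp R N \<and> lfp R N' \<and> \<alpha> \<in> lhom R N N'"
      show "defect_zero N N' \<alpha> \<longleftrightarrow> ev_zero R N N' \<alpha> M"
        using s[unfolded kerDefect_sub_kerEv_def] h cogen_defect[OF assms(2) conjunct2[OF fc]] by blast
    qed
  qed
  show ?thesis using p1 p2 by blast
qed


end
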